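(* Let $s,l,n\in\mathbb N$ with $l>s$, let $Y$, $\Pi$, $J_{l,n}$, $C_{12}$, $T$, $d$, $\chi$, $\delta_n$ be as in the context, and let $x^*\in\mathbb R$ satisfy $$\min_{i\in\mathbb Z}|x^*-y_i|\ge 2sC_{12}\frac{\pi}{n}.$$ Then, with positive constants $C_{13},C_{14},C_{15}$ depending only on $s$ and $l$: (i) $\frac12<d_{l,n}(x^*;s;Y)<\frac32$; (ii) $T(x)=\frac1{2\pi}x+\tilde T(x)$ with $\tilde T\in\mathbb T_{l(n-1)+s}$; (iii) $\Pi(x^* )T'(x)\Pi(x)\ge0$ for all $x\in\mathbb R$; (iv) $|T'(x)|\le C_{13}\,n\,\delta_n^{2(l-s)}(x;x^* )$ for all $x\in\mathbb R$; (v) $|T'(x)|\ge \frac1{C_{14}}\,n\,\delta_n^{2l}(x;x^* )\left|\frac{\Pi(x)}{\Pi(x^* )}\right|$ for all $x\in\bigcup_{\nu\in\mathbb Z}\left[x^*+\frac{2\pi\nu}{n}+\frac{\pi}{2n},\,x^*+\frac{2\pi\nu}{n}+\frac{2\pi}{n}-\frac{\pi}{2n}\right]$; (vi) $|\chi(x;x^* )-T(x)|\le C_{15}\,\delta_n^{2(l-s)-1}(x;x^* )$ for all $x$ with $|x-x^*|\le2\pi$.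
   Context: $Y=\{y_i\}_{i=1}^{2s}$ with $-\pi\le y_{2s}<\dots<y_1<\pi$, extended to all $i\in\mathbb Z$ by $y_i:=y_{i+2s}+2\pi$; $\Pi(x):=\prod_{i=1}^{2s}\sin\frac12(x-y_i)$. $\mathbb T_m$ is the space of real trigonometric polynomials of order $\le m$. Jackson-type kernel: $J_{l,n}(t):=\frac1{\gamma_{l,n}}\left(\frac{\sin(nt/2)}{\sin(t/2)}\right)^{2l}$, $\gamma_{l,n}:=\int_{-\pi}^{\pi}\left(\frac{\sin(nt/2)}{\sin(t/2)}\right)^{2l}dt$. $C_{12}=C_{12}(l)$ is a positive constant such that $\int_{-\pi}^{\pi}(1+n|t|)^{\nu}J_{l,n}(t)\,dt\le C_{12}$ for all $n\in\mathbb N$ and $\nu=0,1,\dots,2l-2$. For $x^*$ with $\Pi(x^* )\ne0$: $d_{l,n}(x^*;s;Y):=\int_{x^*-\pi}^{x^*+\pi}J_{l,n}(t-x^* )\frac{\Pi(t)}{\Pi(x^* )}dt$ and $T(x)=T_{l,n}(x;x^*;s;Y):=\frac1{d_{l,n}(x^*;s;Y)}\int_{x^*-\pi}^{x}J_{l,n}(t-x^* )\frac{\Pi(t)}{\Pi(x^* )}dt$. Further $\chi(x;x^* ):=0$ if $x\le x^*$ and $:=1$ if $x>x^*$; $\delta_n(x;x^* ):=\min\{1,\frac1{n|\sin\frac{x-x^*}2|}\}$. *)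

theory Defs
  imports "HOL-Analysis.Analysis"
begin

definition oint :: "real \<Rightarrow> real \<Rightarrow> (real \<Rightarrow> real) \<Rightarrow> real" where
  "oint a b f = (if a \<le> b then integral {a..b} f else - integral {b..a} f)"

text \<open>Extension of the nodes y_1,...,y_{2s} to all integer indices by y_i = y_{i+2s} + 2 pi.\<close>
definition yext :: "nat \<Rightarrow> (nat \<Rightarrow> real) \<Rightarrow> int \<Rightarrow> real" where
  "yext s y i = y (nat ((i - 1) mod (2 * int s) + 1)) - 2 * pi * of_int ((i - 1) div (2 * int s))"

definition Pi_Y :: "nat \<Rightarrow> (nat \<Rightarrow> real) \<Rightarrow> real \<Rightarrow> real" where
  "Pi_Y s y x = (\<Prod>i\<in>{1 .. 2 * s}. sin ((x - y i) / 2))"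

text \<open>(sin(nt/2)/sin(t/2))^(2l), with its continuous value n^(2l) where sin(t/2) = 0.\<close>
definition jratio :: "nat \<Rightarrow> nat \<Rightarrow> real \<Rightarrow> real" where
  "jratio l n t = (if sin (t / 2) = 0 then real n ^ (2 * l)
                   else (sin (real n * t / 2) / sin (t / 2)) ^ (2 * l))"

definition gamma_ln :: "nat \<Rightarrow> nat \<Rightarrow> real" where
  "gamma_ln l n = integral {-pi..pi} (jratio l n)"

definition J_ln :: "nat \<Rightarrow> nat \<Rightarrow> real \<Rightarrow> real" where
  "J_ln l n t = jratio l n t / gamma_ln l n"

definition d_ln :: "nat \<Rightarrow> nat \<Rightarrow> real \<Rightarrow> nat \<Rightarrow> (nat \<Rightarrow> real) \<Rightarrow> real" where
  "d_ln l n xs s y = integral {xs - pi..xs + pi} (\<lambda>t. J_ln l n (t - xs) * (Pi_Y s y t / Pi_Y s y xs))"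

definition T_ln :: "nat \<Rightarrow> nat \<Rightarrow> real \<Rightarrow> nat \<Rightarrow> (nat \<Rightarrow> real) \<Rightarrow> real \<Rightarrow> real" where
  "T_ln l n xs s y x = oint (xs - pi) x (\<lambda>t. J_ln l n (t - xs) * (Pi_Y s y t / Pi_Y s y xs))
                         / d_ln l n xs s y"

definition chi :: "real \<Rightarrow> real \<Rightarrow> real" where
  "chi x xs = (if x \<le> xs then 0 else 1)"

text \<open>delta_n(x;x*) = min{1, 1/(n|sin((x-x*)/2)|)}, with 1/0 read as +infinity.\<close>
definition delta_n :: "nat \<Rightarrow> real \<Rightarrow> real \<Rightarrow> real" where
  "delta_n n x xs = (if real n * \<bar>sin ((x - xs) / 2)\<bar> = 0 then 1
                     else min 1 (1 / (real n * \<bar>sin ((x - xs) / 2)\<bar>)))"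

definition trig_poly :: "nat \<Rightarrow> (real \<Rightarrow> real) \<Rightarrow> bool" where
  "trig_poly m f \<longleftrightarrow> (\<exists>a b :: nat \<Rightarrow> real. \<forall>x. f x = (\<Sum>k\<le>m. a k * cos (real k * x) + b k * sin (real k * x)))"

end

theory Submission
  imports Defs
begin


lemma tp_add: "trig_poly m f \<Longrightarrow> trig_poly m g \<Longrightarrow> trig_poly m (\<lambda>x. f x + g x)"
proof -
  assume "trig_poly m f" "trig_poly m g"
  then obtain a b c d where f: "\<And>x. f x = (\<Sum>k\<le>m. a k * cos (real k * x) + b k * sin (real k * x))"
    and g: "\<And>x. g x = (\<Sum>k\<le>m. c k * cos (real k * x) + d k * sin (real k * x))"
    unfolding trig_poly_def by blast
  show ?thesis unfolding trig_poly_def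
    by (rule exI[of _ "\<lambda>k. a k + c k"], rule exI[of _ "\<lambda>k. b k + d k"])
       (simp add: f g sum.distrib[symmetric] algebra_simps)
qed

lemma tp_scale: "trig_poly m f \<Longrightarrow> trig_poly m (\<lambda>x. c * f x)"
proof -
  assume "trig_poly m f"
  then obtain a b where f: "\<And>x. f x = (\<Sum>k\<le>m. a k * cos (real k * x) + b k * sin (real k * x))"
    unfolding trig_poly_def by blast
  show ?thesis unfolding trig_poly_def
    by (rule exI[of _ "\<lambda>k. c * a k"], rule exI[of _ "\<lambda>k. c * b k"])
       (simp add: f sum_distrib_left algebra_simps)
qed

lemma sum_delta_mult: "finite A \<Longrightarrow> (\<Sum>k\<in>A. (if k = j then c else 0) * f k) = (if j \<in> A then c * f j else (0::real))"
proof -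
  assume "finite A"
  have "(\<Sum>k\<in>A. (if k = j then c else 0) * f k) = (\<Sum>k\<in>A. if k = j then c * f k else 0)" by (rule sum.cong) auto
  also have "\<dots> = (if j \<in> A then c * f j else 0)" using \<open>finite A\<close> by (rule sum.delta)
  finally show ?thesis .
qed

lemma tp_const: "trig_poly m (\<lambda>x. c)"
  unfolding trig_poly_def
  by (rule exI[of _ "\<lambda>k. if k = 0 then c else 0"], rule exI[of _ "\<lambda>k. 0"])
     (simp add: sum_delta_mult sum.distrib)

lemma tp_cos: "k \<le> m \<Longrightarrow> trig_poly m (\<lambda>x. cos (real k * x))"
  unfolding trig_poly_def
  by (rule exI[of _ "\<lambda>j. if j = k then 1 else 0"], rule exI[of _ "\<lambda>k. 0"])
     (simp add: sum_delta_mult sum.distrib)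

lemma tp_sin: "k \<le> m \<Longrightarrow> trig_poly m (\<lambda>x. sin (real k * x))"
  unfolding trig_poly_def
  by (rule exI[of _ "\<lambda>k. 0"], rule exI[of _ "\<lambda>j. if j = k then 1 else 0"])
     (simp add: sum_delta_mult sum.distrib)

lemma tp_sum: "finite S \<Longrightarrow> (\<And>i. i \<in> S \<Longrightarrow> trig_poly m (f i)) \<Longrightarrow> trig_poly m (\<lambda>x. \<Sum>i\<in>S. f i x)"
proof (induction S rule: finite_induct)
  case empty then show ?case using tp_const[of m 0] by simp
next
  case (insert i S)
  then show ?case using tp_add[of m "f i" "\<lambda>x. \<Sum>i\<in>S. f i x"] by simp
qed

lemma tp_mono: "trig_poly m f \<Longrightarrow> m \<le> m' \<Longrightarrow> trig_poly m' f"
proof -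
  assume "trig_poly m f" "m \<le> m'"
  then obtain a b where f: "\<And>x. f x = (\<Sum>k\<le>m. a k * cos (real k * x) + b k * sin (real k * x))"
    unfolding trig_poly_def by blast
  have "f x = (\<Sum>k\<le>m'. (if k \<le> m then a k else 0) * cos (real k * x) + (if k \<le> m then b k else 0) * sin (real k * x))" for x
    unfolding f using \<open>m \<le> m'\<close>
    by (intro sum.mono_neutral_cong_left) auto
  then show ?thesis unfolding trig_poly_def
    by (intro exI[of _ "\<lambda>k. if k \<le> m then a k else 0"] exI[of _ "\<lambda>k. if k \<le> m then b k else 0"]) auto
qed

lemma tp_cos_diff: "nat \<bar>int i - int j\<bar> \<le> m \<Longrightarrow> trig_poly m (\<lambda>x. cos ((real i - real j) * x))"
proof (cases "j \<le> i")
  case True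
  assume h: "nat \<bar>int i - int j\<bar> \<le> m"
  have e: "(real i - real j) = real (i - j)" using True by simp
  have "i - j \<le> m" using h True by simp
  then show ?thesis unfolding e by (rule tp_cos)
next
  case False
  assume h: "nat \<bar>int i - int j\<bar> \<le> m"
  have e: "(real i - real j) = - real (j - i)" using False by simp
  have "j - i \<le> m" using h False by simp
  then show ?thesis unfolding e using tp_cos[of "j-i" m] by (simp del: of_nat_diff)
qed

lemma tp_sin_diff: "nat \<bar>int i - int j\<bar> \<le> m \<Longrightarrow> trig_poly m (\<lambda>x. sin ((real i - real j) * x))"
proof (cases "j \<le> i")
  case True
  assume h: "nat \<bar>int i - int j\<bar> \<le> m"
  have e: "(real i - real j) = real (i - j)" using True by simp
  have "i - j \<le> m" using h True by simp
  then show ?thesis unfolding e by (rule tp_sin)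
next
  case False
  assume h: "nat \<bar>int i - int j\<bar> \<le> m"
  have e: "(real i - real j) = - real (j - i)" using False by simp
  have "j - i \<le> m" using h False by simp
  then show ?thesis unfolding e using tp_scale[OF tp_sin[of "j-i" m], of "-1"] by (simp del: of_nat_diff)
qed

lemma tp_cos_add: "i + j \<le> m \<Longrightarrow> trig_poly m (\<lambda>x. cos ((real i + real j) * x))"
  using tp_cos[of "i+j" m] by (simp add: add.commute)
lemma tp_sin_add: "i + j \<le> m \<Longrightarrow> trig_poly m (\<lambda>x. sin ((real i + real j) * x))"
  using tp_sin[of "i+j" m] by (simp add: add.commute)



lemma tp_term_mult:
  assumes "i \<le> m" "j \<le> k"
  shows "trig_poly (m + k) (\<lambda>x. (a * cos (real i * x) + b * sin (real i * x)) * (c * cos (real j * x) + d * sin (real j * x)))"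
proof -
  have p1: "cos (real i * x) * cos (real j * x) = (cos ((real i - real j) * x) + cos ((real i + real j) * x))/2" for x
    using cos_times_cos[of "real i * x" "real j * x"] by (simp add: left_diff_distrib distrib_right)
  have p2: "cos (real i * x) * sin (real j * x) = (sin ((real i + real j) * x) - sin ((real i - real j) * x))/2" for x
    using cos_times_sin[of "real i * x" "real j * x"] by (simp add: left_diff_distrib distrib_right)
  have p3: "sin (real i * x) * cos (real j * x) = (sin ((real i + real j) * x) + sin ((real i - real j) * x))/2" for x
    using sin_times_cos[of "real i * x" "real j * x"] by (simp add: left_diff_distrib distrib_right)
  have p4: "sin (real i * x) * sin (real j * x) = (cos ((real i - real j) * x) - cos ((real i + real j) * x))/2" for x
    using sin_times_sin[of "real i * x" "real j * x"] by (simp add: left_diff_distrib distrib_right)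
  have e: "(a * cos (real i * x) + b * sin (real i * x)) * (c * cos (real j * x) + d * sin (real j * x))
    = (a*c/2) * cos ((real i - real j) * x) + (a*c/2) * cos ((real i + real j) * x)
    + (a*d/2) * sin ((real i + real j) * x) + (-(a*d/2)) * sin ((real i - real j) * x)
    + (b*c/2) * sin ((real i + real j) * x) + (b*c/2) * sin ((real i - real j) * x)
    + (b*d/2) * cos ((real i - real j) * x) + (-(b*d/2)) * cos ((real i + real j) * x)" for x
  proof -
    have "(a * cos (real i * x) + b * sin (real i * x)) * (c * cos (real j * x) + d * sin (real j * x))
      = a*c*(cos (real i * x) * cos (real j * x)) + a*d*(cos (real i * x) * sin (real j * x))
       + b*c*(sin (real i * x) * cos (real j * x)) + b*d*(sin (real i * x) * sin (real j * x))"
      by (simp add: algebra_simps)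
    also have "\<dots> = a*c*((cos ((real i - real j) * x) + cos ((real i + real j) * x))/2)
       + a*d*((sin ((real i + real j) * x) - sin ((real i - real j) * x))/2)
       + b*c*((sin ((real i + real j) * x) + sin ((real i - real j) * x))/2)
       + b*d*((cos ((real i - real j) * x) - cos ((real i + real j) * x))/2)"
      by (simp only: p1 p2 p3 p4)
    finally show ?thesis by (simp add: field_simps)
  qed
  have h1: "nat \<bar>int i - int j\<bar> \<le> m + k" using assms by simp
  have h2: "i + j \<le> m + k" using assms by simp
  show ?thesis unfolding e
    by (intro tp_add tp_scale tp_cos_diff tp_sin_diff tp_cos_add tp_sin_add h1 h2)
qed

lemma tp_mult: "trig_poly m f \<Longrightarrow> trig_poly k g \<Longrightarrow> trig_poly (m + k) (\<lambda>x. f x * g x)"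
proof -
  assume "trig_poly m f" "trig_poly k g"
  then obtain a b c d where f: "\<And>x. f x = (\<Sum>i\<le>m. a i * cos (real i * x) + b i * sin (real i * x))"
    and g: "\<And>x. g x = (\<Sum>j\<le>k. c j * cos (real j * x) + d j * sin (real j * x))"
    unfolding trig_poly_def by blast
  have e: "f x * g x = (\<Sum>i\<le>m. \<Sum>j\<le>k. (a i * cos (real i * x) + b i * sin (real i * x)) * (c j * cos (real j * x) + d j * sin (real j * x)))" for x
    unfolding f g by (simp add: sum_product)
  show ?thesis unfolding e
    by (intro tp_sum tp_term_mult) auto
qed

lemma tp_power: "trig_poly m f \<Longrightarrow> trig_poly (m * k) (\<lambda>x. f x ^ k)"
proof (induction k)
  case 0 then show ?case using tp_const[of 0 1] by simp
next
  case (Suc k)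
  then show ?case using tp_mult[of m f "m * k" "\<lambda>x. f x ^ k"] by (simp add: add.commute)
qed

lemma tp_shift: "trig_poly m f \<Longrightarrow> trig_poly m (\<lambda>x. f (x - c))"
proof -
  assume "trig_poly m f"
  then obtain a b where f: "\<And>x. f x = (\<Sum>k\<le>m. a k * cos (real k * x) + b k * sin (real k * x))"
    unfolding trig_poly_def by blast
  have "f (x - c) = (\<Sum>k\<le>m. (a k * cos (real k * c) - b k * sin (real k * c)) * cos (real k * x)
     + (a k * sin (real k * c) + b k * cos (real k * c)) * sin (real k * x))" for x
    unfolding f by (intro sum.cong refl) (simp add: right_diff_distrib cos_diff sin_diff algebra_simps)
  then show ?thesis unfolding trig_poly_def
    by (intro exI[of _ "\<lambda>k. a k * cos (real k * c) - b k * sin (real k * c)"] exI[of _ "\<lambda>k. a k * sin (real k * c) + b k * cos (real k * c)"]) auto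
qed



definition Dk :: "nat \<Rightarrow> real \<Rightarrow> real" where
  "Dk n t = (\<Sum>j<n. cos ((real n - 1 - 2 * real j) * t / 2))"

lemma Dk_sin: "sin (t/2) * Dk n t = sin (real n * t / 2)"
proof -
  define h where "h j = sin ((real n - 2 * real j) * t / 2)" for j
  have tm: "sin (t/2) * cos ((real n - 1 - 2 * real j) * t / 2) = (h j - h (Suc j)) / 2" for j
  proof -
    have "sin (t/2) * cos ((real n - 1 - 2 * real j) * t / 2)
       = (sin (t/2 + (real n - 1 - 2 * real j) * t / 2) + sin (t/2 - (real n - 1 - 2 * real j) * t / 2)) / 2"
      by (rule sin_times_cos)
    also have "t/2 + (real n - 1 - 2 * real j) * t / 2 = (real n - 2 * real j) * t / 2"
      by (simp add: field_simps)
    also have "t/2 - (real n - 1 - 2 * real j) * t / 2 = - ((real n - 2 * real (Suc j)) * t / 2)"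
      by (simp add: field_simps)
    finally show ?thesis unfolding h_def by (simp only: sin_minus) simp
  qed
  then have "sin (t/2) * Dk n t = (\<Sum>j<n. (h j - h (Suc j)) / 2)"
    unfolding Dk_def sum_distrib_left by (intro sum.cong refl tm)
  also have "\<dots> = (\<Sum>j<n. h j - h (Suc j)) / 2"
    by (simp add: sum_divide_distrib)
  also have "\<dots> = (h 0 - h n) / 2" by (simp only: sum_lessThan_telescope')
  also have "\<dots> = sin (real n * t / 2)" unfolding h_def
    by (simp add: field_simps)
  finally show ?thesis .
qed

lemma Dk_bound: "\<bar>Dk n t\<bar> \<le> real n"
proof -
  have "\<bar>Dk n t\<bar> \<le> (\<Sum>j<n. \<bar>cos ((real n - 1 - 2 * real j) * t / 2)\<bar>)"
    unfolding Dk_def by (rule sum_abs)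
  also have "\<dots> \<le> (\<Sum>j<n. 1)" by (intro sum_mono) simp
  finally show ?thesis by simp
qed

lemma Dk_zero:
  assumes "sin (t/2) = 0"
  shows "Dk n t ^ 2 = real n ^ 2"
proof -
  obtain k :: int where k: "t/2 = of_int k * pi" using assms sin_zero_iff_int2 by blast
  define c where "c = cos ((real n - 1) * (of_int k * pi))"
  have "cos ((real n - 1 - 2 * real j) * t / 2) = c" for j
  proof -
    have eq: "(real n - 1 - 2 * real j) * t / 2 = (real n - 1) * (of_int k * pi) - (2 * pi) * of_int (int j * k)"
      using k by (simp add: field_simps)
    show ?thesis unfolding eq cos_diff c_def cos_int_2pin sin_int_2pin by simp
  qed
  then have "Dk n t = real n * c" unfolding Dk_def by simp
  moreover have "c^2 = 1"
  proof -
    have "(real n - 1) * (of_int k * pi) = pi * of_int ((int n - 1) * k)" by simp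
    then have "sin ((real n - 1) * (of_int k * pi)) = 0" by (simp only: sin_npi_int)
    then show ?thesis unfolding c_def using sin_cos_squared_add[of "(real n - 1) * (of_int k * pi)"] by simp
  qed
  ultimately show ?thesis by (simp add: power_mult_distrib)
qed

lemma jratio_Dk: "l \<ge> 1 \<Longrightarrow> jratio l n t = (Dk n t ^ 2) ^ l"
proof (cases "sin (t/2) = 0")
  case True
  then show ?thesis unfolding jratio_def using Dk_zero[OF True, of n] by (simp add: power_mult)
next
  case False
  have "Dk n t = sin (real n * t / 2) / sin (t / 2)" using Dk_sin[of t n] False
    by (simp add: field_simps)
  then show ?thesis unfolding jratio_def using False by (simp add: power_mult)
qed

lemma tp_Dk2: "n \<ge> 1 \<Longrightarrow> trig_poly (n - 1) (\<lambda>t. Dk n t ^ 2)"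
proof -
  assume n: "n \<ge> 1"
  have e: "Dk n t ^ 2 = (\<Sum>j<n. \<Sum>k<n. (1/2) * cos ((real k - real j) * t) + (1/2) * cos ((real (n-1) - real (j + k)) * t))" for t
  proof -
    have "Dk n t ^ 2 = (\<Sum>j<n. \<Sum>k<n. cos ((real n - 1 - 2 * real j) * t / 2) * cos ((real n - 1 - 2 * real k) * t / 2))"
      unfolding Dk_def power2_eq_square sum_product by simp
    also have "\<dots> = (\<Sum>j<n. \<Sum>k<n. (1/2) * cos ((real k - real j) * t) + (1/2) * cos ((real (n-1) - real (j + k)) * t))"
    proof (intro sum.cong refl)
      fix j k
      have a: "(real n - 1 - 2 * real j) * t / 2 - (real n - 1 - 2 * real k) * t / 2 = (real k - real j) * t"
        by (simp add: field_simps)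
      have b: "(real n - 1 - 2 * real j) * t / 2 + (real n - 1 - 2 * real k) * t / 2 = (real (n-1) - real (j + k)) * t"
        using n by (simp add: field_simps of_nat_diff)
      show "cos ((real n - 1 - 2 * real j) * t / 2) * cos ((real n - 1 - 2 * real k) * t / 2)
        = (1/2) * cos ((real k - real j) * t) + (1/2) * cos ((real (n-1) - real (j + k)) * t)"
        unfolding cos_times_cos a b by simp
    qed
    finally show ?thesis .
  qed
  show ?thesis unfolding e
  proof (intro tp_sum tp_add tp_scale tp_cos_diff)
    fix j k assume "j \<in> {..<n}" "k \<in> {..<n}"
    then show "nat \<bar>int k - int j\<bar> \<le> n - 1" "nat \<bar>int (n - 1) - int (j + k)\<bar> \<le> n - 1"
      by auto
  qed auto
qed

lemma tp_jratio: "n \<ge> 1 \<Longrightarrow> l \<ge> 1 \<Longrightarrow> trig_poly ((n - 1) * l) (jratio l n)"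
proof -
  assume "n \<ge> 1" "l \<ge> 1"
  have "jratio l n = (\<lambda>t. (Dk n t ^ 2) ^ l)" using jratio_Dk[OF \<open>l \<ge> 1\<close>] by auto
  then show ?thesis using tp_power[OF tp_Dk2[OF \<open>n \<ge> 1\<close>], of l] by simp
qed

lemma continuous_jratio: "l \<ge> 1 \<Longrightarrow> continuous_on S (jratio l n)"
proof -
  assume "l \<ge> 1"
  have "jratio l n = (\<lambda>t. (Dk n t ^ 2) ^ l)" using jratio_Dk[OF \<open>l \<ge> 1\<close>] by auto
  then show ?thesis unfolding Dk_def by (auto intro!: continuous_intros)
qed

lemma tp_prod: "finite S \<Longrightarrow> (\<And>i. i \<in> S \<Longrightarrow> trig_poly 1 (f i)) \<Longrightarrow> trig_poly (card S) (\<lambda>x. \<Prod>i\<in>S. f i x)"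
proof (induction S rule: finite_induct)
  case empty then show ?case using tp_const[of 0 1] by simp
next
  case (insert i S)
  then show ?case using tp_mult[of 1 "f i" "card S" "\<lambda>x. \<Prod>i\<in>S. f i x"] by simp
qed

lemma prod_pairs: "(\<Prod>i::nat\<in>{1 .. 2 * s}. f i) = (\<Prod>k\<in>{1..s}. f (2*k - 1) * f (2*k) :: real)" for s :: nat
proof (induction s)
  case 0 then show ?case by simp
next
  case (Suc s)
  have "{1 .. 2 * Suc s} = insert (2 * s + 2) (insert (2 * s + 1) {1 .. 2 * s})" by auto
  then have "(\<Prod>i\<in>{1 .. 2 * Suc s}. f i) = f (2 * s + 2) * (f (2 * s + 1) * (\<Prod>i\<in>{1 .. 2 * s}. f i))" by simp
  moreover have "{1..Suc s} = insert (Suc s) {1..s}" by auto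
  ultimately show ?case using Suc by (simp add: algebra_simps)
qed

lemma tp_sinsin: "trig_poly 1 (\<lambda>x. sin ((x - a)/2) * sin ((x - b)/2))"
proof -
  have e: "sin ((x - a)/2) * sin ((x - b)/2) = (1/2) * cos ((b - a)/2) + (-1/2) * cos (real 1 * (x - (a+b)/2))" for x
  proof -
    have a1: "(x - a)/2 - (x - b)/2 = (b - a)/2" by (simp add: field_simps)
    have a2: "(x - a)/2 + (x - b)/2 = real 1 * (x - (a+b)/2)" by (simp add: field_simps)
    show ?thesis unfolding sin_times_sin a1 a2 by simp
  qed
  show ?thesis unfolding e
    by (intro tp_add tp_scale tp_const tp_shift[of 1 "\<lambda>x. cos (real 1 * x)"] tp_cos) simp
qed

lemma tp_Pi: "trig_poly s (Pi_Y s y)"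
proof -
  have "Pi_Y s y = (\<lambda>x. \<Prod>k\<in>{1..s}. sin ((x - y (2*k-1))/2) * sin ((x - y (2*k))/2))"
    unfolding Pi_Y_def by (intro ext prod_pairs)
  then show ?thesis using tp_prod[of "{1..s}" "\<lambda>k x. sin ((x - y (2*k-1))/2) * sin ((x - y (2*k))/2)"] tp_sinsin
    by simp
qed

lemma tp_integrand:
  assumes "n \<ge> 1" "l \<ge> 1"
  shows "trig_poly (l * (n - 1) + s) (\<lambda>t. J_ln l n (t - xs) * (Pi_Y s y t / Pi_Y s y xs))"
proof -
  have 1: "trig_poly ((n-1)*l) (\<lambda>t. (1 / gamma_ln l n) * jratio l n (t - xs))"
    by (intro tp_scale tp_shift[of _ "jratio l n"] tp_jratio assms)
  have 2: "trig_poly s (\<lambda>t. (1 / Pi_Y s y xs) * Pi_Y s y t)"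
    by (intro tp_scale tp_Pi)
  have "(\<lambda>t. J_ln l n (t - xs) * (Pi_Y s y t / Pi_Y s y xs)) = (\<lambda>t. ((1 / gamma_ln l n) * jratio l n (t - xs)) * ((1 / Pi_Y s y xs) * Pi_Y s y t))"
    unfolding J_ln_def by auto
  then show ?thesis using tp_mult[OF 1 2] by (simp add: mult.commute)
qed



lemma sin_ge_xcos: "0 \<le> t \<Longrightarrow> t \<le> pi \<Longrightarrow> t * cos t \<le> sin t"
proof -
  assume t: "0 \<le> t" "t \<le> pi"
  have "(\<lambda>u. sin u - u * cos u) 0 \<le> (\<lambda>u. sin u - u * cos u) t"
  proof (rule deriv_nonneg_imp_mono[where g' = "\<lambda>u. u * sin u" and g = "\<lambda>u. sin u - u * cos u" and a = 0 and b = t])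
    fix u assume "u \<in> {0..t}"
    show "((\<lambda>u. sin u - u * cos u) has_real_derivative u * sin u) (at u)"
      by (auto intro!: derivative_eq_intros)
    show "0 \<le> u * sin u" using \<open>u \<in> {0..t}\<close> t by (auto intro!: mult_nonneg_nonneg sin_ge_zero)
  qed (use t in simp)
  then show ?thesis by simp
qed

lemma jordan: "0 \<le> x \<Longrightarrow> x \<le> pi/2 \<Longrightarrow> 2 * x / pi \<le> sin x"
proof (cases "x = 0")
  case True then show ?thesis by simp
next
  case False
  assume x: "0 \<le> x" "x \<le> pi/2"
  then have xp: "0 < x" using False by simp
  have "(\<lambda>u. - (sin u / u)) x \<le> (\<lambda>u. - (sin u / u)) (pi/2)"
  proof (rule deriv_nonneg_imp_mono[where g' = "\<lambda>u. (sin u - u * cos u) / u^2" and g = "\<lambda>u. - (sin u / u)" and a = x and b = "pi/2"])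
    fix u assume u: "u \<in> {x..pi/2}"
    then have "u > 0" using xp by simp
    show "((\<lambda>u. - (sin u / u)) has_real_derivative (sin u - u * cos u) / u^2) (at u)"
      using \<open>u > 0\<close>
      by (auto intro!: derivative_eq_intros simp: field_simps power2_eq_square)
    show "0 \<le> (sin u - u * cos u) / u^2" using sin_ge_xcos[of u] u \<open>u > 0\<close> by simp
  qed (use x in simp)
  then have "2 / pi \<le> sin x / x" by simp
  then show ?thesis using xp by (simp add: field_simps)
qed

lemma abs_sin_half_ge: "\<bar>u\<bar> \<le> pi \<Longrightarrow> \<bar>u\<bar> / pi \<le> \<bar>sin (u/2)\<bar>"
proof (cases "u \<ge> 0")
  case True
  assume "\<bar>u\<bar> \<le> pi"
  then show ?thesis using jordan[of "u/2"] True by (simp add: sin_ge_zero)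
next
  case False
  assume "\<bar>u\<bar> \<le> pi"
  then show ?thesis using jordan[of "-u/2"] False by (simp add: sin_ge_zero)
qed

lemma sin_half_periodic: "\<bar>sin ((z - 2 * pi * of_int k) / 2)\<bar> = \<bar>sin (z / 2)\<bar>"
proof -
  have e: "(z - 2 * pi * of_int k) / 2 = z/2 - pi * of_int k" by (simp add: field_simps)
  have s0: "sin (pi * of_int k) = 0" by (rule sin_npi_int)
  then have c1: "\<bar>cos (pi * of_int k)\<bar> = 1" using sin_cos_squared_add[of "pi * of_int k"]
    by (simp add: abs_square_eq_1)
  show ?thesis unfolding e sin_diff s0 using c1 by (simp add: abs_mult)
qed

lemma abs_sin_half_dist:
  assumes "0 \<le> D" "D \<le> pi" "\<And>k::int. D \<le> \<bar>z - 2 * pi * of_int k\<bar>"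
  shows "D / pi \<le> \<bar>sin (z/2)\<bar>"
proof -
  define k where "k = \<lfloor>z / (2*pi) + 1/2\<rfloor>"
  have "of_int k \<le> z / (2*pi) + 1/2" "z / (2*pi) + 1/2 < of_int k + 1"
    unfolding k_def by linarith+
  then have "\<bar>z - 2 * pi * of_int k\<bar> \<le> pi" using pi_gt_zero by (simp add: field_simps abs_le_iff)
  then have "\<bar>z - 2 * pi * of_int k\<bar> / pi \<le> \<bar>sin ((z - 2 * pi * of_int k)/2)\<bar>"
    by (rule abs_sin_half_ge)
  moreover have "D / pi \<le> \<bar>z - 2 * pi * of_int k\<bar> / pi" using assms(3)[of k]
    by (simp add: divide_right_mono)
  ultimately show ?thesis using sin_half_periodic by simp
qed

lemma sin_nat_periodic: "sin (real k * (x + 2 * pi)) = sin (real k * x)"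
  "cos (real k * (x + 2 * pi)) = cos (real k * x)"
proof -
  have e: "real k * (x + 2 * pi) = real k * x + 2 * real k * pi" by (simp add: algebra_simps)
  show "sin (real k * (x + 2 * pi)) = sin (real k * x)" unfolding e sin_add by simp
  show "cos (real k * (x + 2 * pi)) = cos (real k * x)" unfolding e cos_add by simp
qed

lemma tp_antideriv:
  fixes a b :: "nat \<Rightarrow> real"
  assumes g: "\<And>x. g x = (\<Sum>k\<le>M. a k * cos (real k * x) + b k * sin (real k * x))"
  defines "G \<equiv> \<lambda>x. a 0 * x + (\<Sum>k\<in>{1..M}. a k * sin (real k * x) / real k - b k * cos (real k * x) / real k)"
  shows "(G has_real_derivative g x) (at x)"
    and "G (x + 2 * pi) = G x + 2 * pi * a 0"
    and "trig_poly M (\<lambda>x. G x - a 0 * x)"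
proof -
  have split: "(\<Sum>k\<le>M. f k) = f 0 + (\<Sum>k\<in>{1..M}. f k)" for f :: "nat \<Rightarrow> real"
  proof -
    have "{..M} = insert 0 {1..M}" by auto
    then show ?thesis by simp
  qed
  have "(G has_real_derivative a 0 + (\<Sum>k\<in>{1..M}. a k * cos (real k * x) + b k * sin (real k * x))) (at x)"
    unfolding G_def
  proof (intro derivative_eq_intros DERIV_sum)
    show "a 0 * 1 + (\<Sum>k\<in>{1..M}. a k * (cos (real k * x) * (0 * x + real k * 1)) / real k - b k * (- sin (real k * x) * (0 * x + real k * 1)) / real k) = a 0 + (\<Sum>k\<in>{1..M}. a k * cos (real k * x) + b k * sin (real k * x))"
      by (auto intro!: sum.cong)
  qed auto
  moreover have "a 0 + (\<Sum>k\<in>{1..M}. a k * cos (real k * x) + b k * sin (real k * x)) = g x"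
    unfolding g split[of "\<lambda>k. a k * cos (real k * x) + b k * sin (real k * x)"] by simp
  ultimately show "(G has_real_derivative g x) (at x)" by simp
  show "G (x + 2 * pi) = G x + 2 * pi * a 0"
    unfolding G_def sin_nat_periodic by (simp add: algebra_simps)
  have "G x - a 0 * x = (\<Sum>k\<le>M. (if k = 0 then 0 else - b k / real k) * cos (real k * x) + (if k = 0 then 0 else a k / real k) * sin (real k * x))" for x
    unfolding G_def split[of "\<lambda>k. (if k = 0 then 0 else - b k / real k) * cos (real k * x) + (if k = 0 then 0 else a k / real k) * sin (real k * x)"]
    by (auto simp: algebra_simps sum_subtractf[symmetric] diff_divide_distrib intro!: sum.cong)
  then show "trig_poly M (\<lambda>x. G x - a 0 * x)" unfolding trig_poly_def
    by (intro exI[of _ "\<lambda>k. if k = 0 then 0 else - b k / real k"] exI[of _ "\<lambda>k. if k = 0 then 0 else a k / real k"]) auto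
qed



definition dd :: "nat \<Rightarrow> real \<Rightarrow> real" where
  "dd n u = (if real n * \<bar>sin (u / 2)\<bar> = 0 then 1 else min 1 (1 / (real n * \<bar>sin (u / 2)\<bar>)))"

lemma delta_dd: "delta_n n x xs = dd n (x - xs)"
  unfolding delta_n_def dd_def by simp

lemma dd_pos: "0 < dd n u" and dd_le1: "dd n u \<le> 1"
  unfolding dd_def by auto

lemma dd_le_inv: "real n * \<bar>sin (u/2)\<bar> \<noteq> 0 \<Longrightarrow> dd n u \<le> 1 / (real n * \<bar>sin (u / 2)\<bar>)"
  unfolding dd_def by auto

lemma dd_inv: "1 + real n * \<bar>sin (u/2)\<bar> \<le> 2 / dd n u"
proof -
  define w where "w = real n * \<bar>sin (u/2)\<bar>"
  have w0: "w \<ge> 0" unfolding w_def by simp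
  show ?thesis
  proof (cases "w \<le> 1")
    case True
    then have "dd n u = 1" unfolding dd_def w_def[symmetric] using w0 by (auto simp: min_def)
    then show ?thesis using True unfolding w_def by simp
  next
    case False
    then have "dd n u = 1 / w" unfolding dd_def w_def[symmetric] by (auto simp: min_def)
    then show ?thesis using False unfolding w_def[symmetric] by simp
  qed
qed

lemma dd_lower: "1 / (1 + real n * \<bar>u\<bar>) \<le> dd n u"
proof -
  define w where "w = real n * \<bar>sin (u/2)\<bar>"
  have "\<bar>sin (u/2)\<bar> \<le> \<bar>u\<bar>" using abs_sin_x_le_abs_x[of "u/2"] by simp
  then have w: "w \<le> 1 + real n * \<bar>u\<bar>" "0 \<le> w" unfolding w_def
    by (auto intro: order.trans[OF mult_left_mono] )
  have "0 < 1 + real n * \<bar>u\<bar>" by (simp add: add_pos_nonneg)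
  then have "1 / (1 + real n * \<bar>u\<bar>) \<le> 1" by (simp add: divide_le_eq)
  moreover have "w \<noteq> 0 \<Longrightarrow> 1 / (1 + real n * \<bar>u\<bar>) \<le> 1 / w"
    using w by (intro divide_left_mono) auto
  ultimately show ?thesis unfolding dd_def w_def[symmetric] by auto
qed

lemma dd_upper: "\<bar>u\<bar> \<le> pi \<Longrightarrow> dd n u \<le> 2 * pi / (1 + real n * \<bar>u\<bar>)"
proof -
  assume u: "\<bar>u\<bar> \<le> pi"
  define w where "w = real n * \<bar>sin (u/2)\<bar>"
  have ws: "\<bar>u\<bar> / pi \<le> \<bar>sin (u/2)\<bar>" by (rule abs_sin_half_ge[OF u])
  then have wl: "real n * \<bar>u\<bar> / pi \<le> w" unfolding w_def
    using mult_left_mono[OF ws, of "real n"] by simp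
  show ?thesis
  proof (cases "1 + real n * \<bar>u\<bar> \<le> 2 * pi")
    case True
    then have "1 \<le> 2 * pi / (1 + real n * \<bar>u\<bar>)" by (simp add: le_divide_eq add_pos_nonneg)
    then show ?thesis using dd_le1[of n u] by linarith
  next
    case False
    then have nu: "real n * \<bar>u\<bar> > 1" using pi_gt3 by linarith
    then have wpos: "w > 0" using wl by (smt (verit) divide_pos_pos pi_gt_zero)
    have wpos': "real n * \<bar>sin (u/2)\<bar> \<noteq> 0" using wpos unfolding w_def by linarith
    have d1: "dd n u \<le> 1 / w" unfolding w_def by (rule dd_le_inv[OF wpos'])
    have nup: "0 < real n * \<bar>u\<bar> / pi" using nu by simp
    have wp2: "0 < w * (real n * \<bar>u\<bar> / pi)" using wpos nup by (rule mult_pos_pos)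
    have "1 / w \<le> 1 / (real n * \<bar>u\<bar> / pi)" by (rule divide_left_mono[OF wl _ wp2]) simp
    with d1 have "dd n u \<le> 1 / (real n * \<bar>u\<bar> / pi)" by linarith
    also have "\<dots> \<le> 2 * pi / (1 + real n * \<bar>u\<bar>)" using nu by (simp add: field_simps)
    finally show ?thesis .
  qed
qed

lemma dd_periodic: "dd n (u + 2 * pi) = dd n u" "dd n (u - 2 * pi) = dd n u"
proof -
  have "\<bar>sin ((u + 2 * pi) / 2)\<bar> = \<bar>sin (u/2)\<bar>"
    using sin_half_periodic[of "u + 2 * pi" 1] by simp
  moreover have "\<bar>sin ((u - 2 * pi) / 2)\<bar> = \<bar>sin (u/2)\<bar>"
    using sin_half_periodic[of "u" 1] by simp
  ultimately show "dd n (u + 2 * pi) = dd n u" "dd n (u - 2 * pi) = dd n u" unfolding dd_def by simp_all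
qed



lemma jratio_nonneg: "0 \<le> jratio l n u"
  unfolding jratio_def by (simp add: power_mult)

lemma jratio_upper: "l \<ge> 1 \<Longrightarrow> jratio l n u \<le> real n ^ (2 * l) * dd n u ^ (2 * l)"
proof -
  assume l: "l \<ge> 1"
  define w where "w = real n * \<bar>sin (u/2)\<bar>"
  have a: "jratio l n u \<le> real n ^ (2 * l)"
  proof -
    have "Dk n u ^ 2 \<le> real n ^ 2" using power_mono[OF Dk_bound[of n u], of 2] by simp
    then have "(Dk n u ^ 2) ^ l \<le> (real n ^ 2) ^ l" by (rule power_mono) auto
    then show ?thesis using jratio_Dk[OF l] by (simp add: power_mult)
  qed
  show ?thesis
  proof (cases "w \<le> 1")
    case True
    have w0: "w \<ge> 0" unfolding w_def by simp
    have "dd n u = 1" unfolding dd_def w_def[symmetric] using True w0 by (auto simp: min_def le_divide_eq)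
    then show ?thesis using a by simp
  next
    case False
    then have dd: "dd n u = 1 / w" unfolding dd_def w_def[symmetric] by (auto simp: min_def)
    have s0: "sin (u/2) \<noteq> 0" using False unfolding w_def by auto
    have "jratio l n u = (sin (real n * u / 2) / sin (u / 2)) ^ (2 * l)" unfolding jratio_def using s0 by simp
    also have "\<dots> = \<bar>sin (real n * u / 2) / sin (u / 2)\<bar> ^ (2 * l)" by (simp only: power_mult power2_abs)
    also have "\<dots> \<le> (1 / \<bar>sin (u / 2)\<bar>) ^ (2 * l)"
      by (intro power_mono) (auto simp: abs_divide divide_right_mono)
    also have "\<dots> = real n ^ (2 * l) * dd n u ^ (2 * l)" unfolding dd w_def
      using False s0 unfolding w_def by (cases "n = 0") (simp_all add: power_divide power_mult_distrib)
    finally show ?thesis .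
  qed
qed



lemma abs_jordan: "\<bar>v\<bar> \<le> pi/2 \<Longrightarrow> 2 * \<bar>v\<bar> / pi \<le> \<bar>sin v\<bar>"
proof (cases "v \<ge> 0")
  case True
  assume "\<bar>v\<bar> \<le> pi/2"
  then show ?thesis using jordan[of v] True by (simp add: sin_ge_zero)
next
  case False
  assume "\<bar>v\<bar> \<le> pi/2"
  then show ?thesis using jordan[of "-v"] False by (simp add: sin_ge_zero)
qed

lemma jratio_lower_small:
  assumes "n \<ge> 1" "\<bar>u\<bar> \<le> pi / real n"
  shows "(2 * real n / pi) ^ (2 * l) \<le> jratio l n u"
proof (cases "sin (u/2) = 0")
  case True
  have "2 * real n / pi \<le> real n" using pi_gt3 assms(1) by (simp add: field_simps)
  then have "(2 * real n / pi) ^ (2 * l) \<le> real n ^ (2 * l)" by (rule power_mono) (use pi_gt_zero in auto)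
  then show ?thesis unfolding jratio_def using True by simp
next
  case False
  have npos: "real n > 0" using assms by simp
  have "pi / real n \<le> pi / 1" using assms(1) by (intro divide_left_mono) auto
  then have "\<bar>u\<bar> \<le> pi" using assms(2) by simp
  have "\<bar>real n * u / 2\<bar> \<le> pi / 2" using assms(2) npos by (simp add: abs_mult field_simps)
  then have s1: "2 * \<bar>real n * u / 2\<bar> / pi \<le> \<bar>sin (real n * u / 2)\<bar>" by (rule abs_jordan)
  have s2: "\<bar>sin (u/2)\<bar> \<le> \<bar>u\<bar> / 2" using abs_sin_x_le_abs_x[of "u/2"] by simp
  have sp: "\<bar>sin (u/2)\<bar> > 0" using False by simp
  have "2 * real n / pi \<le> \<bar>sin (real n * u / 2)\<bar> / \<bar>sin (u/2)\<bar>"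
  proof -
    have "2 * real n / pi * \<bar>sin (u/2)\<bar> \<le> 2 * real n / pi * (\<bar>u\<bar> / 2)"
      using s2 npos by (intro mult_left_mono) auto
    also have "\<dots> = 2 * \<bar>real n * u / 2\<bar> / pi" using npos by (simp add: abs_mult field_simps)
    also have "\<dots> \<le> \<bar>sin (real n * u / 2)\<bar>" by (rule s1)
    finally show ?thesis using sp by (simp add: le_divide_eq)
  qed
  then have "(2 * real n / pi) ^ (2 * l) \<le> (\<bar>sin (real n * u / 2)\<bar> / \<bar>sin (u/2)\<bar>) ^ (2 * l)"
    by (rule power_mono) (use pi_gt_zero in auto)
  also have "\<dots> = jratio l n u" unfolding jratio_def using False
    by (simp add: power_mult power_divide)
  finally show ?thesis .
qed



lemma jratio_lower_mid:
  assumes "l \<ge> 1" "sin (real n * u / 2) ^ 2 \<ge> 1/2"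
  shows "(real n ^ 2 / 2) ^ l * dd n u ^ (2 * l) \<le> jratio l n u"
proof -
  have s0: "sin (u/2) \<noteq> 0"
  proof
    assume "sin (u/2) = 0"
    then have "sin (real n * u / 2) = 0" using Dk_sin[of u n] by simp
    then show False using assms(2) by simp
  qed
  define w where "w = real n * \<bar>sin (u/2)\<bar>"
  have dd2: "real n ^ 2 * dd n u ^ 2 \<le> 1 / sin (u/2) ^ 2"
  proof (cases "n = 0")
    case True then show ?thesis by simp
  next
    case False
    then have wpos: "w > 0" unfolding w_def using s0 by simp
    have wpos': "real n * \<bar>sin (u/2)\<bar> \<noteq> 0" using wpos unfolding w_def by linarith
    have "dd n u \<le> 1 / w" unfolding w_def by (rule dd_le_inv[OF wpos'])
    then have "dd n u ^ 2 \<le> (1 / w) ^ 2" using dd_pos[of n u] by (simp add: power_mono)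
    then have "real n ^ 2 * dd n u ^ 2 \<le> real n ^ 2 * (1 / w) ^ 2" by (rule mult_left_mono) simp
    also have "\<dots> = 1 / sin (u/2) ^ 2" unfolding w_def using False by (simp add: field_simps power2_eq_square)
    finally show ?thesis .
  qed
  have "(real n ^ 2 / 2) ^ l * dd n u ^ (2 * l) = ((real n ^ 2 * dd n u ^ 2) / 2) ^ l"
    by (simp add: power_mult power_mult_distrib power_divide)
  also have "\<dots> \<le> ((1 / sin (u/2) ^ 2) / 2) ^ l"
    using dd2 by (intro power_mono[rotated] divide_right_mono) (auto simp: dd_pos)
  also have "\<dots> \<le> (sin (real n * u / 2) ^ 2 / sin (u/2) ^ 2) ^ l"
  proof (rule power_mono)
    show "1 / sin (u / 2)^2 / 2 \<le> (sin (real n * u / 2))^2 / (sin (u / 2))^2"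
      using assms(2) s0 by (simp add: field_simps)
  qed auto
  also have "\<dots> = jratio l n u" unfolding jratio_def using s0
    by (simp add: power_mult power_divide)
  finally show ?thesis .
qed



lemma ftc_real:
  assumes "\<And>x. x \<in> {a..b} \<Longrightarrow> (G has_real_derivative g x) (at x)" "a \<le> b"
  shows "(g has_integral (G b - G a)) {a..b}"
proof (rule fundamental_theorem_of_calculus[OF assms(2)])
  fix x assume "x \<in> {a..b}"
  then show "(G has_vector_derivative g x) (at x within {a..b})"
    using assms(1) has_field_derivative_at_within has_real_derivative_iff_has_vector_derivative by blast
qed

lemma oint_antideriv:
  assumes "\<And>x. (G has_real_derivative g x) (at x)"
  shows "oint a b g = G b - G a"
proof (cases "a \<le> b")
  case True
  then show ?thesis unfolding oint_def using ftc_real[of a b G g] assms by (simp add: integral_unique)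
next
  case False
  then have "integral {b..a} g = G a - G b" using ftc_real[of b a G g] assms by (simp add: integral_unique)
  then show ?thesis unfolding oint_def using False by simp
qed

lemma mono_compare:
  assumes "\<And>x. x \<in> {a..b} \<Longrightarrow> (G has_real_derivative g x) (at x)"
    "\<And>x. x \<in> {a..b} \<Longrightarrow> (H has_real_derivative h x) (at x)"
    "\<And>x. x \<in> {a..b} \<Longrightarrow> g x \<le> h x" "a \<le> b"
  shows "G b - G a \<le> H b - H a"
proof -
  have "(\<lambda>x. H x - G x) a \<le> (\<lambda>x. H x - G x) b"
  proof (rule deriv_nonneg_imp_mono[where g = "\<lambda>x. H x - G x" and g' = "\<lambda>x. h x - g x" and a = a and b = b])
    fix x assume x: "x \<in> {a..b}"
    show "((\<lambda>x. H x - G x) has_real_derivative h x - g x) (at x)"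
      using assms(1,2)[OF x] by (rule DERIV_diff[rotated])
    show "0 \<le> h x - g x" using assms(3)[OF x] by simp
  qed (use assms(4) in simp)
  then show ?thesis by simp
qed

lemma tp_has_antideriv:
  assumes "trig_poly M g"
  shows "\<exists>G c. (\<forall>x. (G has_real_derivative g x) (at x)) \<and> (\<forall>x. G (x + 2 * pi) = G x + 2 * pi * c)
            \<and> trig_poly M (\<lambda>x. G x - c * x)"
proof -
  obtain a b where g: "\<And>x. g x = (\<Sum>k\<le>M. a k * cos (real k * x) + b k * sin (real k * x))"
    using assms unfolding trig_poly_def by blast
  show ?thesis using tp_antideriv[OF g] by blast
qed

lemma jratio_antideriv: "n \<ge> 1 \<Longrightarrow> l \<ge> 1 \<Longrightarrow> \<exists>G. \<forall>x. (G has_real_derivative jratio l n x) (at x)"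
  using tp_has_antideriv[OF tp_jratio] by blast

lemma gamma_lower:
  assumes n: "n \<ge> 1" and l: "l \<ge> 1"
  shows "(2 * pi / real n) * (2 * real n / pi) ^ (2*l) \<le> gamma_ln l n"
proof -
  obtain G where G: "\<And>x. (G has_real_derivative jratio l n x) (at x)" using jratio_antideriv[OF n l] by blast
  have np: "real n > 0" using n by simp
  have pn: "pi / real n \<le> pi" using n by (simp add: divide_le_eq pi_gt_zero)
  have pn0: "0 \<le> pi / real n" using np by simp
  have g: "gamma_ln l n = G pi - G (-pi)" unfolding gamma_ln_def
    using ftc_real[of "-pi" pi G "jratio l n"] G by (simp add: integral_unique)
  have "G pi - G (pi / real n) \<ge> (\<lambda>x. 0) pi - (\<lambda>x. 0) (pi / real n)"
    by (rule mono_compare[of _ _ "\<lambda>x. 0" "\<lambda>x. 0"]) (use G pn jratio_nonneg in auto)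
  moreover have "G (- (pi / real n)) - G (-pi) \<ge> (\<lambda>x. 0) (- (pi / real n)) - (\<lambda>x. 0) (-pi)"
    by (rule mono_compare[of _ _ "\<lambda>x. 0" "\<lambda>x. 0"]) (use G pn jratio_nonneg in auto)
  moreover have "G (pi / real n) - G (- (pi / real n)) \<ge>
      (\<lambda>x. (2 * real n / pi) ^ (2*l) * x) (pi / real n) - (\<lambda>x. (2 * real n / pi) ^ (2*l) * x) (- (pi / real n))"
  proof (rule mono_compare[of _ _ _ "\<lambda>x. (2 * real n / pi) ^ (2*l)"])
    fix x assume x: "x \<in> {- (pi / real n)..pi / real n}"
    show "((\<lambda>x. (2 * real n / pi) ^ (2*l) * x) has_real_derivative (2 * real n / pi) ^ (2*l)) (at x)"
      by (auto intro!: derivative_eq_intros)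
    show "(2 * real n / pi) ^ (2*l) \<le> jratio l n x"
      using x by (intro jratio_lower_small n) auto
  qed (use G pn0 in auto)
  ultimately show ?thesis unfolding g by (simp add: field_simps)
qed

lemma gamma_upper:
  assumes n: "n \<ge> 1" and l: "l \<ge> 1"
  shows "gamma_ln l n \<le> 4 * pi ^ 3 * real n ^ (2*l) / real n"
proof -
  obtain G where G: "\<And>x. (G has_real_derivative jratio l n x) (at x)" using jratio_antideriv[OF n l] by blast
  have np: "real n > 0" using n by simp
  have g: "gamma_ln l n = G pi - G (-pi)" unfolding gamma_ln_def
    using ftc_real[of "-pi" pi G "jratio l n"] G by (simp add: integral_unique)
  define K where "K = real n ^ (2*l) * (4 * pi^2)"
  have K0: "K \<ge> 0" unfolding K_def by simp
  define H where "H x = K * arctan (real n * x) / real n" for x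
  have H: "(H has_real_derivative K / (1 + (real n * x)^2)) (at x)" for x
  proof -
    have p: "1 + (real n * x)^2 > 0" by (simp add: add_pos_nonneg)
    have d1: "((\<lambda>x. real n * x) has_real_derivative real n) (at x)"
      using DERIV_cmult[OF DERIV_ident, of "real n"] by simp
    have d2: "((\<lambda>x. arctan (real n * x)) has_real_derivative inverse (1 + (real n * x)^2) * real n) (at x)"
      by (rule DERIV_chain2[OF DERIV_arctan d1])
    have "(H has_real_derivative K * (inverse (1 + (real n * x)^2) * (real n * 1)) / real n) (at x)"
      unfolding H_def using DERIV_cdivide[OF DERIV_cmult[OF d2, of K], of "real n"] by simp
    moreover have "K * (inverse (1 + (real n * x)^2) * (real n * 1)) / real n = K / (1 + (real n * x)^2)"
    proof -
      have "K * (inverse (1 + (real n * x)^2) * (real n * 1)) / real n = K * inverse (1 + (real n * x)^2) * (real n / real n)"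
        by simp
      also have "\<dots> = K / (1 + (real n * x)^2)" using np by (simp add: divide_inverse)
      finally show ?thesis .
    qed
    ultimately show ?thesis by simp
  qed
  have bound: "jratio l n x \<le> K / (1 + (real n * x)^2)" if x: "x \<in> {-pi..pi}" for x
  proof -
    have ax: "\<bar>x\<bar> \<le> pi" using x by auto
    have d0: "0 < dd n x" "dd n x \<le> 1" by (rule dd_pos, rule dd_le1)
    have "jratio l n x \<le> real n ^ (2*l) * dd n x ^ (2*l)" by (rule jratio_upper[OF l])
    also have "dd n x ^ (2*l) \<le> dd n x ^ 2" using d0 l by (intro power_decreasing) auto
    then have "real n ^ (2*l) * dd n x ^ (2*l) \<le> real n ^ (2*l) * dd n x ^ 2" by (rule mult_left_mono) simp
    also have "dd n x ^ 2 \<le> (2 * pi / (1 + real n * \<bar>x\<bar>)) ^ 2"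
      using dd_upper[OF ax, of n] d0 by (simp add: power_mono)
    also have "(2 * pi / (1 + real n * \<bar>x\<bar>)) ^ 2 \<le> 4 * pi^2 / (1 + (real n * x)^2)"
    proof -
      have a0: "0 \<le> real n * \<bar>x\<bar>" by simp
      have "(real n * x)^2 = (real n * \<bar>x\<bar>)^2" by (simp add: power_mult_distrib)
      moreover have "1 + (real n * \<bar>x\<bar>)^2 \<le> (1 + real n * \<bar>x\<bar>)^2"
        using a0 by (simp add: power2_eq_square algebra_simps)
      ultimately have "1 + (real n * x)^2 \<le> (1 + real n * \<bar>x\<bar>)^2" by simp
      then have "4 * pi^2 / (1 + real n * \<bar>x\<bar>)^2 \<le> 4 * pi^2 / (1 + (real n * x)^2)"
      proof (rule divide_left_mono)
        have "0 < 1 + (real n * x)^2" by (simp add: add_pos_nonneg)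
        moreover have "0 < (1 + real n * \<bar>x\<bar>)^2" using a0 by (intro zero_less_power) linarith
        ultimately show "0 < (1 + real n * \<bar>x\<bar>)^2 * (1 + (real n * x)^2)" by simp
      qed simp
      then show ?thesis by (simp add: power_divide power_mult_distrib)
    qed
    finally show ?thesis unfolding K_def using np by (simp add: mult_left_mono field_simps)
  qed
  have "G pi - G (-pi) \<le> H pi - H (-pi)"
    by (rule mono_compare[OF _ _ bound]) (use G H in auto)
  also have "H pi - H (-pi) = 2 * K * arctan (real n * pi) / real n"
    unfolding H_def by (simp add: arctan_minus field_simps)
  also have "\<dots> \<le> 2 * K * (pi/2) / real n"
    using arctan_ubound[of "real n * pi"] K0 np by (intro divide_right_mono mult_left_mono) auto
  finally show ?thesis unfolding g K_def by (simp add: field_simps power3_eq_cube power2_eq_square)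
qed



lemma prod_diff_bound:
  fixes f g :: "nat \<Rightarrow> real"
  assumes "finite S" "\<And>i. i \<in> S \<Longrightarrow> \<bar>g i\<bar> \<le> 1" "\<And>i. i \<in> S \<Longrightarrow> \<bar>f i - g i\<bar> \<le> a" "0 \<le> a"
  shows "\<bar>prod f S - prod g S\<bar> \<le> (1 + a) ^ card S - 1"
  using assms
proof (induction S rule: finite_induct)
  case empty then show ?case by simp
next
  case (insert j S)
  have IH: "\<bar>prod f S - prod g S\<bar> \<le> (1 + a) ^ card S - 1" using insert by auto
  have gj: "\<bar>g j\<bar> \<le> 1" and fgj: "\<bar>f j - g j\<bar> \<le> a" using insert by auto
  have fj: "\<bar>f j\<bar> \<le> 1 + a" using gj fgj by linarith
  have G1: "\<bar>prod g S\<bar> \<le> 1" unfolding abs_prod using insert by (intro prod_le_1) auto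
  have "prod f (insert j S) - prod g (insert j S) = f j * (prod f S - prod g S) + (f j - g j) * prod g S"
    using insert by (simp add: algebra_simps)
  then have "\<bar>prod f (insert j S) - prod g (insert j S)\<bar> \<le> \<bar>f j\<bar> * \<bar>prod f S - prod g S\<bar> + \<bar>f j - g j\<bar> * \<bar>prod g S\<bar>"
    by (simp add: abs_mult[symmetric] abs_triangle_ineq)
  also have "\<dots> \<le> (1 + a) * ((1 + a) ^ card S - 1) + a * 1"
    by (intro add_mono mult_mono fj IH fgj G1) (use \<open>0 \<le> a\<close> in auto)
  also have "\<dots> = (1 + a) ^ card (insert j S) - 1" using insert by (simp add: algebra_simps)
  finally show ?case .
qed

lemma prod_abs_bound:
  fixes f :: "nat \<Rightarrow> real"
  assumes "finite S" "\<And>i. i \<in> S \<Longrightarrow> \<bar>f i\<bar> \<le> B"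
  shows "\<bar>prod f S\<bar> \<le> B ^ card S"
proof -
  have "\<bar>prod f S\<bar> = (\<Prod>i\<in>S. \<bar>f i\<bar>)" by (rule abs_prod)
  also have "\<dots> \<le> (\<Prod>i\<in>S. B)" using assms by (intro prod_mono) auto
  finally show ?thesis by simp
qed

lemma binom_bound:
  fixes e r :: real
  assumes "m \<ge> 1" "0 \<le> e" "e \<le> 1" "0 \<le> r"
  shows "(1 + e * r / real m) ^ m - 1 \<le> e * r + e^2 * (1 + r) ^ m"
proof -
  define x where "x = e * r / real m"
  have x0: "0 \<le> x" unfolding x_def using assms by simp
  have split: "{..m} = insert 0 (insert 1 {2..m})" using assms by auto
  have exp1: "(1 + x) ^ m = (\<Sum>k\<le>m. of_nat (m choose k) * x ^ k)"
    using binomial_ring[of x 1 m] by (simp add: add.commute)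
  have exp2: "(1 + r) ^ m = (\<Sum>k\<le>m. of_nat (m choose k) * r ^ k)"
    using binomial_ring[of r 1 m] by (simp add: add.commute)
  have "(1 + x) ^ m = 1 + real m * x + (\<Sum>k\<in>{2..m}. of_nat (m choose k) * x ^ k)"
    unfolding exp1 split by simp
  moreover have "real m * x = e * r" unfolding x_def using assms by simp
  moreover have "(\<Sum>k\<in>{2..m}. of_nat (m choose k) * x ^ k) \<le> (\<Sum>k\<in>{2..m}. e^2 * (of_nat (m choose k) * r ^ k))"
  proof (rule sum_mono)
    fix k assume k: "k \<in> {2..m}"
    have "x ^ k = e ^ k * (r ^ k / real m ^ k)" unfolding x_def by (simp add: power_mult_distrib power_divide)
    also have "\<dots> \<le> e ^ 2 * (r ^ k / 1)"
    proof (rule mult_mono)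
      show "e ^ k \<le> e ^ 2" using k assms by (intro power_decreasing) auto
      show "r ^ k / real m ^ k \<le> r ^ k / 1" using assms
        by (intro divide_left_mono) (auto simp: one_le_power)
    qed (use assms in auto)
    finally have "x ^ k \<le> e ^ 2 * r ^ k" by simp
    then have "of_nat (m choose k) * x ^ k \<le> of_nat (m choose k) * (e ^ 2 * r ^ k)"
      by (rule mult_left_mono) simp
    then show "of_nat (m choose k) * x ^ k \<le> e^2 * (of_nat (m choose k) * r ^ k)"
      by (simp add: algebra_simps)
  qed
  moreover have "(\<Sum>k\<in>{2..m}. e^2 * (of_nat (m choose k) * r ^ k)) \<le> e^2 * (1 + r) ^ m"
  proof -
    have "(\<Sum>k\<in>{2..m}. of_nat (m choose k) * r ^ k) \<le> (\<Sum>k\<le>m. of_nat (m choose k) * r ^ k)"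
      using assms by (intro sum_mono2) auto
    then show ?thesis unfolding exp2 sum_distrib_left[symmetric] by (simp add: mult_left_mono)
  qed
  ultimately show ?thesis unfolding x_def[symmetric] by linarith
qed

lemma cos_pow_bound: "\<bar>cos (t/2) ^ (2 * s) - 1\<bar> \<le> real s * t^2 / 4"
proof -
  have c: "cos (t/2) ^ (2 * s) = (1 - sin (t/2)^2) ^ s"
    by (simp add: power_mult cos_squared_eq)
  have s2: "sin (t/2)^2 \<le> t^2 / 4"
  proof -
    have "\<bar>sin (t/2)\<bar> \<le> \<bar>t/2\<bar>" by (rule abs_sin_x_le_abs_x)
    then have "\<bar>sin (t/2)\<bar>^2 \<le> \<bar>t/2\<bar>^2" by (rule power_mono) simp
    then show ?thesis by (simp add: power_divide)
  qed
  have s1: "sin (t/2)^2 \<le> 1" by (simp add: abs_square_le_1)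
  have lo: "1 - real s * sin (t/2)^2 \<le> (1 - sin (t/2)^2) ^ s"
    using Bernoulli_inequality[of "-(sin (t/2)^2)" s] s1 by simp
  have hi: "(1 - sin (t/2)^2) ^ s \<le> 1"
    using s1 by (intro power_le_one) auto
  have "real s * sin (t/2)^2 \<le> real s * (t^2/4)" using s2 by (rule mult_left_mono) simp
  then show ?thesis unfolding c using lo hi by (simp add: abs_le_iff)
qed

lemma factor_eq:
  fixes A t :: real
  assumes "sin A \<noteq> 0"
  shows "sin (A + t/2) / sin A = cos (t/2) + (cos A / sin A) * sin (t/2)"
  unfolding sin_add using assms by (simp add: field_simps)



lemma cot_bound:
  fixes A c0 :: real
  assumes "0 < c0" "c0 \<le> \<bar>sin A\<bar>"
  shows "\<bar>cos A / sin A\<bar> \<le> 1 / c0"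
proof -
  have "\<bar>cos A / sin A\<bar> = \<bar>cos A\<bar> / \<bar>sin A\<bar>" by (simp add: abs_divide)
  also have "\<dots> \<le> 1 / \<bar>sin A\<bar>" using assms by (intro divide_right_mono) auto
  also have "\<dots> \<le> 1 / c0" using assms by (intro divide_left_mono) auto
  finally show ?thesis .
qed

lemma R_prod:
  assumes "\<And>i. i \<in> {1 .. 2 * s} \<Longrightarrow> sin ((xs - y i)/2) \<noteq> 0"
  shows "Pi_Y s y (xs + t) / Pi_Y s y xs = (\<Prod>i\<in>{1 .. 2 * s}. sin ((xs - y i)/2 + t/2) / sin ((xs - y i)/2))"
proof -
  have e: "(xs + t - y i) / 2 = (xs - y i)/2 + t/2" for i by (simp add: field_simps)
  show ?thesis unfolding Pi_Y_def e using assms by (simp add: prod_dividef)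
qed

lemma R_close:
  assumes c0: "0 < c0" and sb: "\<And>i. i \<in> {1 .. 2 * s} \<Longrightarrow> c0 \<le> \<bar>sin ((xs - y i)/2)\<bar>"
  shows "\<bar>Pi_Y s y (xs + t) / Pi_Y s y xs - 1\<bar> \<le> ((1 + \<bar>t\<bar> / (2 * c0)) ^ (2 * s) - 1) + real s * t^2 / 4"
proof -
  have nz: "\<And>i. i \<in> {1 .. 2 * s} \<Longrightarrow> sin ((xs - y i)/2) \<noteq> 0" using sb c0 by force
  define f where "f i = sin ((xs - y i)/2 + t/2) / sin ((xs - y i)/2)" for i
  have R: "Pi_Y s y (xs + t) / Pi_Y s y xs = prod f {1 .. 2 * s}" unfolding f_def by (rule R_prod[OF nz])
  have a0: "0 \<le> \<bar>t\<bar> / (2 * c0)" using c0 by simp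
  have "\<bar>prod f {1 .. 2 * s} - (\<Prod>i\<in>{1 .. 2 * s}. cos (t/2))\<bar> \<le> (1 + \<bar>t\<bar> / (2 * c0)) ^ card {1 .. 2 * s} - 1"
  proof (rule prod_diff_bound[OF _ _ _ a0])
    fix i assume i: "i \<in> {1 .. 2 * s}"
    have "f i - cos (t/2) = (cos ((xs - y i)/2) / sin ((xs - y i)/2)) * sin (t/2)"
      unfolding f_def factor_eq[OF nz[OF i]] by simp
    also have "\<bar>\<dots>\<bar> \<le> (1 / c0) * (\<bar>t\<bar> / 2)"
    proof -
      have "\<bar>cos ((xs - y i)/2) / sin ((xs - y i)/2)\<bar> \<le> 1 / c0" by (rule cot_bound[OF c0 sb[OF i]])
      moreover have "\<bar>sin (t/2)\<bar> \<le> \<bar>t\<bar> / 2" using abs_sin_x_le_abs_x[of "t/2"] by simp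
      ultimately show ?thesis unfolding abs_mult by (intro mult_mono) (use c0 in auto)
    qed
    finally show "\<bar>f i - cos (t/2)\<bar> \<le> \<bar>t\<bar> / (2 * c0)" by simp
  qed auto
  moreover have "(\<Prod>i\<in>{1 .. 2 * s}. cos (t/2)) = cos (t/2) ^ (2 * s)" by simp
  moreover have "\<bar>cos (t/2) ^ (2 * s) - 1\<bar> \<le> real s * t^2 / 4" by (rule cos_pow_bound)
  ultimately have h1: "\<bar>prod f {1 .. 2 * s} - cos (t/2) ^ (2 * s)\<bar> \<le> (1 + \<bar>t\<bar> / (2 * c0)) ^ (2 * s) - 1"
    and h2: "\<bar>cos (t/2) ^ (2 * s) - 1\<bar> \<le> real s * t^2 / 4" by simp_all
  show ?thesis unfolding R using h1 h2 by linarith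
qed

lemma R_abs:
  assumes c0: "0 < c0" and sb: "\<And>i. i \<in> {1 .. 2 * s} \<Longrightarrow> c0 \<le> \<bar>sin ((xs - y i)/2)\<bar>"
  shows "\<bar>Pi_Y s y (xs + t) / Pi_Y s y xs\<bar> \<le> (1 + \<bar>sin (t/2)\<bar> / c0) ^ (2 * s)"
proof -
  have nz: "\<And>i. i \<in> {1 .. 2 * s} \<Longrightarrow> sin ((xs - y i)/2) \<noteq> 0" using sb c0 by force
  define f where "f i = sin ((xs - y i)/2 + t/2) / sin ((xs - y i)/2)" for i
  have R: "Pi_Y s y (xs + t) / Pi_Y s y xs = prod f {1 .. 2 * s}" unfolding f_def by (rule R_prod[OF nz])
  have "\<bar>prod f {1 .. 2 * s}\<bar> \<le> (1 + \<bar>sin (t/2)\<bar> / c0) ^ card {1 .. 2 * s}"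
  proof (rule prod_abs_bound)
    fix i assume i: "i \<in> {1 .. 2 * s}"
    have "f i = cos (t/2) + (cos ((xs - y i)/2) / sin ((xs - y i)/2)) * sin (t/2)"
      unfolding f_def factor_eq[OF nz[OF i]] by simp
    also have "\<bar>\<dots>\<bar> \<le> 1 + (1 / c0) * \<bar>sin (t/2)\<bar>"
    proof -
      have "\<bar>cos ((xs - y i)/2) / sin ((xs - y i)/2)\<bar> \<le> 1 / c0" by (rule cot_bound[OF c0 sb[OF i]])
      then have "\<bar>(cos ((xs - y i)/2) / sin ((xs - y i)/2)) * sin (t/2)\<bar> \<le> (1 / c0) * \<bar>sin (t/2)\<bar>"
        unfolding abs_mult by (rule mult_right_mono) simp
      moreover have "\<bar>cos (t/2)\<bar> \<le> 1" by simp
      ultimately show ?thesis by (smt (verit) abs_triangle_ineq)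
    qed
    finally show "\<bar>f i\<bar> \<le> 1 + \<bar>sin (t/2)\<bar> / c0" by simp
  qed simp
  then show ?thesis unfolding R by simp
qed



lemma yext_shift:
  assumes "i \<in> {1 .. 2 * s}"
  shows "yext s y (int i + 2 * int s * k) = y i - 2 * pi * of_int k"
proof -
  have s: "s \<ge> 1" using assms by auto
  have e: "int i + 2 * int s * k - 1 = (int i - 1) + k * (2 * int s)" by (simp add: algebra_simps)
  have r: "0 \<le> int i - 1" "int i - 1 < 2 * int s" using assms by auto
  have "(int i + 2 * int s * k - 1) mod (2 * int s) = int i - 1"
    unfolding e using r by simp
  moreover have "(int i + 2 * int s * k - 1) div (2 * int s) = k"
    unfolding e using r s by simp
  ultimately show ?thesis unfolding yext_def using assms by simp
qed

lemma setup_dist: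
  assumes s: "1 \<le> s" and n: "n \<ge> 1" and C: "C12 > 0"
    and hyp: "\<forall>i::int. \<bar>xs - yext s y i\<bar> \<ge> 2 * real s * C12 * pi / real n"
  shows "2 * real s * C12 \<le> real n"
    and "\<And>i. i \<in> {1 .. 2 * s} \<Longrightarrow> 2 * real s * C12 / real n \<le> \<bar>sin ((xs - y i)/2)\<bar>"
proof -
  define D where "D = 2 * real s * C12 * pi / real n"
  have np: "real n > 0" using n by simp
  have D0: "0 \<le> D" unfolding D_def using C np by simp
  have hk: "D \<le> \<bar>(xs - y i) - 2 * pi * of_int k\<bar>" if i: "i \<in> {1 .. 2 * s}" for i k
  proof -
    have "D \<le> \<bar>xs - yext s y (int i + 2 * int s * (- k))\<bar>" using hyp unfolding D_def by blast
    also have "\<dots> = \<bar>(xs - y i) - 2 * pi * of_int k\<bar>" unfolding yext_shift[OF i] by simp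
    finally show ?thesis .
  qed
  have Dpi: "D \<le> pi"
  proof -
    have i1: "1 \<in> {1 .. 2 * s}" using s by simp
    define k where "k = \<lfloor>(xs - y 1) / (2*pi) + 1/2\<rfloor>"
    have "of_int k \<le> (xs - y 1) / (2*pi) + 1/2" "(xs - y 1) / (2*pi) + 1/2 < of_int k + 1"
      unfolding k_def by linarith+
    then have "\<bar>(xs - y 1) - 2 * pi * of_int k\<bar> \<le> pi" using pi_gt_zero by (simp add: field_simps abs_le_iff)
    then show ?thesis using hk[OF i1, of k] by linarith
  qed
  then show "2 * real s * C12 \<le> real n" unfolding D_def using np pi_gt_zero
    by (simp add: field_simps)
  fix i assume i: "i \<in> {1 .. 2 * s}"
  have "D / pi \<le> \<bar>sin ((xs - y i)/2)\<bar>" by (rule abs_sin_half_dist[OF D0 Dpi hk[OF i]])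
  then show "2 * real s * C12 / real n \<le> \<bar>sin ((xs - y i)/2)\<bar>" unfolding D_def by simp
qed



definition c_lo :: "nat \<Rightarrow> real" where "c_lo l = 2 * pi * (2 / pi) ^ (2 * l)"
definition c_hi :: real where "c_hi = 4 * pi ^ 3"

lemma c_lo_pos: "c_lo l > 0" unfolding c_lo_def by simp
lemma c_hi_pos: "c_hi > 0" unfolding c_hi_def by simp

lemma gamma_lower': "n \<ge> 1 \<Longrightarrow> l \<ge> 1 \<Longrightarrow> c_lo l * real n ^ (2 * l) / real n \<le> gamma_ln l n"
proof -
  assume n: "n \<ge> 1" and l: "l \<ge> 1"
  have eq: "c_lo l * real n ^ (2 * l) / real n = (2 * pi / real n) * (2 * real n / pi) ^ (2*l)"
    unfolding c_lo_def by (simp add: power_mult_distrib power_divide field_simps)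
  show ?thesis by (subst eq) (rule gamma_lower[OF n l])
qed

lemma gamma_upper': "n \<ge> 1 \<Longrightarrow> l \<ge> 1 \<Longrightarrow> gamma_ln l n \<le> c_hi * real n ^ (2 * l) / real n"
  unfolding c_hi_def using gamma_upper by simp

lemma gamma_pos: "n \<ge> 1 \<Longrightarrow> l \<ge> 1 \<Longrightarrow> gamma_ln l n > 0"
proof -
  assume n: "n \<ge> 1" and l: "l \<ge> 1"
  have "c_lo l * real n ^ (2 * l) / real n > 0" using c_lo_pos[of l] n by simp
  then show ?thesis using gamma_lower'[OF n l] by linarith
qed

lemma J_nonneg: "n \<ge> 1 \<Longrightarrow> l \<ge> 1 \<Longrightarrow> 0 \<le> J_ln l n u"
  unfolding J_ln_def using gamma_pos jratio_nonneg by (simp add: divide_nonneg_pos)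

lemma J_continuous: "l \<ge> 1 \<Longrightarrow> continuous_on S (J_ln l n)"
proof -
  assume l: "l \<ge> 1"
  have "J_ln l n = (\<lambda>t. inverse (gamma_ln l n) * jratio l n t)" unfolding J_ln_def by (auto simp: divide_inverse)
  then show ?thesis using continuous_on_mult_left[OF continuous_jratio[OF l]] by simp
qed

lemma J_antideriv:
  assumes n: "n \<ge> 1" and l: "l \<ge> 1"
  shows "\<exists>GJ. (\<forall>x. (GJ has_real_derivative J_ln l n x) (at x)) \<and> GJ pi - GJ (-pi) = 1"
proof -
  obtain G where G: "\<And>x. (G has_real_derivative jratio l n x) (at x)" using jratio_antideriv[OF n l] by blast
  have g: "gamma_ln l n = G pi - G (-pi)" unfolding gamma_ln_def
    using ftc_real[of "-pi" pi G "jratio l n"] G by (simp add: integral_unique)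
  have gp: "gamma_ln l n > 0" by (rule gamma_pos[OF n l])
  define GJ where "GJ x = G x / gamma_ln l n" for x
  have "(GJ has_real_derivative J_ln l n x) (at x)" for x
    unfolding GJ_def J_ln_def by (rule DERIV_cdivide[OF G])
  moreover have "GJ pi - GJ (-pi) = 1" unfolding GJ_def using g gp by (simp add: diff_divide_distrib[symmetric])
  ultimately show ?thesis by blast
qed

lemma J_has_integral: "n \<ge> 1 \<Longrightarrow> l \<ge> 1 \<Longrightarrow> (J_ln l n has_integral 1) {-pi..pi}"
proof -
  assume n: "n \<ge> 1" and l: "l \<ge> 1"
  obtain GJ where "\<And>x. (GJ has_real_derivative J_ln l n x) (at x)" "GJ pi - GJ (-pi) = 1"
    using J_antideriv[OF n l] by blast
  then show ?thesis using ftc_real[of "-pi" pi GJ "J_ln l n"] by simp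
qed

lemma J_upper:
  assumes n: "n \<ge> 1" and l: "l \<ge> 1"
  shows "J_ln l n u \<le> real n * dd n u ^ (2 * l) / c_lo l"
proof -
  have gp: "gamma_ln l n > 0" by (rule gamma_pos[OF n l])
  have np: "real n > 0" using n by simp
  have cl: "c_lo l > 0" by (rule c_lo_pos)
  have a: "jratio l n u \<le> real n ^ (2 * l) * dd n u ^ (2 * l)" by (rule jratio_upper[OF l])
  have b: "c_lo l * real n ^ (2 * l) / real n \<le> gamma_ln l n" by (rule gamma_lower'[OF n l])
  have "J_ln l n u \<le> real n ^ (2 * l) * dd n u ^ (2 * l) / gamma_ln l n"
    unfolding J_ln_def using a gp by (simp add: divide_right_mono)
  also have "\<dots> \<le> real n ^ (2 * l) * dd n u ^ (2 * l) / (c_lo l * real n ^ (2 * l) / real n)"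
  proof (rule divide_left_mono[OF b])
    have "0 < c_lo l * real n ^ (2 * l) / real n" using cl np by simp
    then show "0 < gamma_ln l n * (c_lo l * real n ^ (2 * l) / real n)" using gp by (rule mult_pos_pos[rotated])
  qed simp
  also have "\<dots> = real n * dd n u ^ (2 * l) / c_lo l" using np cl by (simp add: field_simps)
  finally show ?thesis .
qed

lemma J_lower_mid:
  assumes n: "n \<ge> 1" and l: "l \<ge> 1" and sn: "sin (real n * u / 2) ^ 2 \<ge> 1/2"
  shows "real n * dd n u ^ (2 * l) / (2 ^ l * c_hi) \<le> J_ln l n u"
proof -
  have gp: "gamma_ln l n > 0" by (rule gamma_pos[OF n l])
  have np: "real n > 0" using n by simp
  have a: "(real n ^ 2 / 2) ^ l * dd n u ^ (2 * l) \<le> jratio l n u" by (rule jratio_lower_mid[OF l sn])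
  have b: "gamma_ln l n \<le> c_hi * real n ^ (2 * l) / real n" by (rule gamma_upper'[OF n l])
  have p: "(real n ^ 2 / 2) ^ l = real n ^ (2 * l) / 2 ^ l" by (simp add: power_divide power_mult)
  have "real n * dd n u ^ (2 * l) / (2 ^ l * c_hi) = (real n ^ 2 / 2) ^ l * dd n u ^ (2 * l) / (c_hi * real n ^ (2 * l) / real n)"
    unfolding p using np c_hi_pos by (simp add: field_simps)
  also have "\<dots> \<le> (real n ^ 2 / 2) ^ l * dd n u ^ (2 * l) / gamma_ln l n"
  proof (rule divide_left_mono[OF b])
    have "0 < c_hi * real n ^ (2 * l) / real n" using c_hi_pos np by simp
    then show "0 < (c_hi * real n ^ (2 * l) / real n) * gamma_ln l n" using gp by (rule mult_pos_pos)
  qed simp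
  also have "\<dots> \<le> jratio l n u / gamma_ln l n" using a gp by (simp add: divide_right_mono)
  finally show ?thesis unfolding J_ln_def .
qed



lemma d_estimate:
  fixes C12 :: real
  assumes s: "1 \<le> s" and ls: "s < l" and n: "n \<ge> 1" and C: "C12 > 0"
    and hyp: "\<forall>\<nu>::nat. \<nu> \<le> 2 * l - 2 \<longrightarrow> integral {-pi..pi} (\<lambda>t. (1 + real n * \<bar>t\<bar>) ^ \<nu> * J_ln l n t) \<le> C12"
    and sb: "\<And>i. i \<in> {1 .. 2 * s} \<Longrightarrow> 2 * real s * C12 / real n \<le> \<bar>sin ((xs - y i)/2)\<bar>"
    and nb: "2 * real s * C12 \<le> real n"
    and GR: "\<And>t. (GR has_real_derivative J_ln l n t * (Pi_Y s y (xs + t) / Pi_Y s y xs)) (at t)"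
  shows "\<bar>GR pi - GR (-pi) - 1\<bar> < 1/2" and "C12 \<ge> 1"
proof -
  have l: "l \<ge> 1" using s ls by simp
  have np: "real n > 0" using n by simp
  define J where "J = J_ln l n"
  define R where "R t = Pi_Y s y (xs + t) / Pi_Y s y xs" for t
  define F where "F \<nu> t = (1 + real n * \<bar>t\<bar>) ^ \<nu> * J t" for \<nu> t
  define I where "I \<nu> = integral {-pi..pi} (F \<nu>)" for \<nu>
  have Fcont: "continuous_on {-pi..pi} (F \<nu>)" for \<nu>
    unfolding F_def J_def using J_continuous[OF l] by (auto intro!: continuous_intros)
  have FI: "(F \<nu> has_integral I \<nu>) {-pi..pi}" for \<nu>
    unfolding I_def using integrable_continuous_interval[OF Fcont] by (simp add: integrable_integral)
  have Ile: "\<nu> \<le> 2 * l - 2 \<Longrightarrow> I \<nu> \<le> C12" for \<nu> using hyp unfolding I_def F_def J_def by blast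
  have JI: "(J has_integral 1) {-pi..pi}" unfolding J_def by (rule J_has_integral[OF n l])
  have F0: "F 0 = J" unfolding F_def by auto
  have I0: "I 0 = 1" using FI[of 0] JI unfolding F0 by (rule has_integral_unique)
  show C1: "C12 \<ge> 1" using Ile[of 0] I0 by simp
  have JRI: "((\<lambda>t. J t * R t) has_integral (GR pi - GR (-pi))) {-pi..pi}"
    unfolding J_def R_def by (rule ftc_real) (use GR in auto)
  have diffI: "((\<lambda>t. J t * R t - J t) has_integral (GR pi - GR (-pi) - 1)) {-pi..pi}"
    by (rule has_integral_diff[OF JRI JI])
  define e where "e = 1 / (2 * C12)"
  define k where "k = real s / (4 * real n ^ 2)"
  have e0: "0 \<le> e" "e \<le> 1" unfolding e_def using C C1 by (auto simp: field_simps)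
  have k0: "0 \<le> k" unfolding k_def by simp
  define B where "B t = e * (F 1 t - J t) + e^2 * F (2 * s) t + k * F 2 t" for t
  have BI: "(B has_integral (e * (I 1 - 1) + e^2 * I (2 * s) + k * I 2)) {-pi..pi}"
    unfolding B_def
    by (intro has_integral_add has_integral_mult_right has_integral_diff FI JI)
  have Jnn: "0 \<le> J t" for t unfolding J_def by (rule J_nonneg[OF n l])
  have pw: "\<bar>J t * R t - J t\<bar> \<le> B t" for t
  proof -
    define r where "r = real n * \<bar>t\<bar>"
    have r0: "0 \<le> r" unfolding r_def by simp
    have c0: "0 < 2 * real s * C12 / real n" using s C np by simp
    have Rc: "\<bar>R t - 1\<bar> \<le> ((1 + \<bar>t\<bar> / (2 * (2 * real s * C12 / real n))) ^ (2 * s) - 1) + real s * t^2 / 4"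
      unfolding R_def by (rule R_close[OF c0 sb])
    have q: "\<bar>t\<bar> / (2 * (2 * real s * C12 / real n)) = e * r / real (2 * s)"
      unfolding e_def r_def using s C np by (simp add: field_simps)
    have bb: "(1 + e * r / real (2 * s)) ^ (2 * s) - 1 \<le> e * r + e^2 * (1 + r) ^ (2 * s)"
      by (rule binom_bound) (use s e0 r0 in auto)
    have tt: "real s * t^2 / 4 \<le> k * (1 + r)^2"
    proof -
      have "real s * t^2 / 4 = k * r^2" unfolding k_def r_def using np by (simp add: field_simps power_mult_distrib)
      also have "\<dots> \<le> k * (1 + r)^2" using k0 r0 by (intro mult_left_mono power_mono) auto
      finally show ?thesis .
    qed
    have Rb: "\<bar>R t - 1\<bar> \<le> e * r + e^2 * (1 + r) ^ (2 * s) + k * (1 + r)^2"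
      using Rc bb tt unfolding q by linarith
    have "J t * R t - J t = J t * (R t - 1)" by (simp add: algebra_simps)
    then have "\<bar>J t * R t - J t\<bar> = J t * \<bar>R t - 1\<bar>" using Jnn[of t] by (simp add: abs_mult)
    also have "\<dots> \<le> J t * (e * r + e^2 * (1 + r) ^ (2 * s) + k * (1 + r)^2)"
      using Rb Jnn[of t] by (rule mult_left_mono)
    also have "\<dots> = B t" unfolding B_def F_def r_def by (simp add: algebra_simps)
    finally show ?thesis .
  qed
  have up: "GR pi - GR (-pi) - 1 \<le> e * (I 1 - 1) + e^2 * I (2 * s) + k * I 2"
    by (rule has_integral_le[OF diffI BI]) (use pw in \<open>auto simp: abs_le_iff\<close>)
  have lo: "-(e * (I 1 - 1) + e^2 * I (2 * s) + k * I 2) \<le> GR pi - GR (-pi) - 1"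
  proof (rule has_integral_le[OF has_integral_neg[OF BI] diffI])
    fix x show "- B x \<le> J x * R x - J x" using pw[of x] by (simp add: abs_le_iff)
  qed
  have I1: "I 1 \<le> C12" "I (2 * s) \<le> C12" "I 2 \<le> C12" using Ile ls s by auto
  have bound: "e * (I 1 - 1) + e^2 * I (2 * s) + k * I 2 \<le> e * (C12 - 1) + e^2 * C12 + k * C12"
    using I1 e0 k0 by (intro add_mono mult_left_mono) auto
  have fin: "e * (C12 - 1) + e^2 * C12 + k * C12 < 1/2"
  proof -
    have a: "e * (C12 - 1) + e^2 * C12 = 1/2 - 1 / (4 * C12)" unfolding e_def using C
      by (simp add: field_simps power2_eq_square)
    have "real s * C12^2 < real n ^ 2"
    proof -
      have "real s * C12^2 < 4 * (real s * C12)^2" using s C by (simp add: power_mult_distrib power2_eq_square)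
      also have "\<dots> = (2 * real s * C12)^2" by (simp add: power_mult_distrib)
      also have "\<dots> \<le> real n ^ 2" using nb s C by (intro power_mono) auto
      finally show ?thesis .
    qed
    then have "k * C12 < 1 / (4 * C12)" unfolding k_def using C np by (simp add: field_simps power2_eq_square)
    then show ?thesis using a by linarith
  qed
  show "\<bar>GR pi - GR (-pi) - 1\<bar> < 1/2" unfolding abs_less_iff using up lo bound fin by linarith
qed



lemma tail_right:
  fixes G g :: "real \<Rightarrow> real" and A u xs :: real
  assumes G: "\<And>t. (G has_real_derivative g t) (at t)"
    and m: "m \<ge> 2" and n: "n \<ge> 1" and A: "A \<ge> 0" and u: "0 \<le> u" "u \<le> pi"
    and gb: "\<And>t. t \<in> {xs+u..xs+pi} \<Longrightarrow> \<bar>g t\<bar> \<le> A * real n / (1 + real n * (t - xs)) ^ m"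
  shows "\<bar>G (xs+pi) - G (xs+u)\<bar> \<le> A / (1 + real n * u) ^ (m - 1)"
proof -
  obtain k where k: "m = k + 2" using m by (metis add.commute le_Suc_ex)
  have np: "real n > 0" using n by simp
  define q where "q t = 1 + real n * (t - xs)" for t
  define H where "H t = - (A / real (k+1)) * inverse (q t ^ (k+1))" for t
  define h where "h t = A * real n / q t ^ m" for t
  have qpos: "t \<in> {xs+u..xs+pi} \<Longrightarrow> q t \<ge> 1" for t unfolding q_def using np u by auto
  have Hd: "(H has_real_derivative h t) (at t)" if t: "t \<in> {xs+u..xs+pi}" for t
  proof -
    have q1: "q t \<ge> 1" by (rule qpos[OF t])
    have Dq: "(q has_real_derivative real n) (at t)" unfolding q_def
      by (auto intro!: derivative_eq_intros)
    have Dp: "((\<lambda>t. q t ^ (k+1)) has_real_derivative of_nat (k+1) * (real n * q t ^ (k + 1 - Suc 0))) (at t)"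
      by (rule DERIV_power[OF Dq])
    have Di: "((\<lambda>t. inverse (q t ^ (k+1))) has_real_derivative - ((of_nat (k+1) * (real n * q t ^ (k + 1 - Suc 0))) * inverse ((q t ^ (k+1)) ^ Suc (Suc 0)))) (at t)"
      by (rule DERIV_inverse_fun[OF Dp]) (use q1 in simp)
    have DH: "(H has_real_derivative - (A / real (k+1)) * (- ((of_nat (k+1) * (real n * q t ^ (k + 1 - Suc 0))) * inverse ((q t ^ (k+1)) ^ Suc (Suc 0))))) (at t)"
      unfolding H_def by (rule DERIV_cmult[OF Di])
    have pw: "(q t ^ (k+1)) ^ Suc (Suc 0) = q t ^ k * q t ^ m" unfolding k by (simp add: power_add[symmetric] power_mult[symmetric] algebra_simps)
    have qk: "q t ^ k \<noteq> 0" "q t ^ m \<noteq> 0" using q1 by auto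
    have "- (A / real (k+1)) * (- ((of_nat (k+1) * (real n * q t ^ (k + 1 - Suc 0))) * inverse ((q t ^ (k+1)) ^ Suc (Suc 0))))
        = (A / real (k+1) * real (k+1)) * real n * (q t ^ k * inverse (q t ^ k * q t ^ m))"
      unfolding pw by (simp add: algebra_simps add_divide_distrib)
    also have "\<dots> = A * real n * inverse (q t ^ m)" using qk by (simp add: nonzero_inverse_mult_distrib)
    also have "\<dots> = h t" unfolding h_def by (simp add: divide_inverse)
    finally have "- (A / real (k+1)) * (- ((of_nat (k+1) * (real n * q t ^ (k + 1 - Suc 0))) * inverse ((q t ^ (k+1)) ^ Suc (Suc 0)))) = h t" .
    then show ?thesis using DH by simp
  qed
  have u1: "xs + u \<le> xs + pi" using u by simp
  have "G (xs+pi) - G (xs+u) \<le> H (xs+pi) - H (xs+u)"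
  proof (rule mono_compare[OF _ Hd _ u1])
    fix t assume t: "t \<in> {xs+u..xs+pi}"
    show "(G has_real_derivative g t) (at t)" by (rule G)
    show "g t \<le> h t" using gb[OF t] unfolding h_def q_def by simp
  qed
  moreover have "(\<lambda>t. - G t) (xs+pi) - (\<lambda>t. - G t) (xs+u) \<le> H (xs+pi) - H (xs+u)"
  proof (rule mono_compare[OF _ Hd _ u1])
    fix t assume t: "t \<in> {xs+u..xs+pi}"
    show "((\<lambda>t. - G t) has_real_derivative - g t) (at t)" by (rule DERIV_minus[OF G])
    show "- g t \<le> h t" using gb[OF t] unfolding h_def q_def by simp
  qed
  moreover have "H (xs+pi) \<le> 0" unfolding H_def using qpos[of "xs+pi"] u A
    by (simp add: mult_nonneg_nonneg)
  moreover have "- H (xs+u) \<le> A / (1 + real n * u) ^ (m - 1)"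
  proof -
    have qu: "q (xs+u) = 1 + real n * u" unfolding q_def by simp
    have q1: "1 + real n * u \<ge> 1" using np u by simp
    have "- H (xs+u) = (A / real (k+1)) / (1 + real n * u) ^ (k+1)" unfolding H_def qu
      by (simp add: divide_inverse)
    also have "\<dots> \<le> A / (1 + real n * u) ^ (k+1)"
    proof (rule divide_right_mono)
      show "A / real (k+1) \<le> A" using A divide_left_mono[of 1 "real (k+1)" A] by simp
    qed (use q1 in simp)
    finally show ?thesis unfolding k by simp
  qed
  ultimately show ?thesis by (simp add: abs_le_iff)
qed

lemma tail_left:
  fixes G g :: "real \<Rightarrow> real" and A u xs :: real
  assumes G: "\<And>t. (G has_real_derivative g t) (at t)"
    and m: "m \<ge> 2" and n: "n \<ge> 1" and A: "A \<ge> 0" and u: "-pi \<le> u" "u \<le> 0"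
    and gb: "\<And>t. t \<in> {xs-pi..xs+u} \<Longrightarrow> \<bar>g t\<bar> \<le> A * real n / (1 + real n * (xs - t)) ^ m"
  shows "\<bar>G (xs+u) - G (xs-pi)\<bar> \<le> A / (1 + real n * \<bar>u\<bar>) ^ (m - 1)"
proof -
  define G' where "G' t = - G (2 * xs - t)" for t
  define g' where "g' t = g (2 * xs - t)" for t
  have G': "(G' has_real_derivative g' t) (at t)" for t
  proof -
    have "((\<lambda>t. 2 * xs - t) has_real_derivative -1) (at t)" by (auto intro!: derivative_eq_intros)
    from DERIV_chain2[OF G this] have "((\<lambda>t. G (2 * xs - t)) has_real_derivative g (2 * xs - t) * -1) (at t)" .
    from DERIV_minus[OF this] show ?thesis unfolding G'_def g'_def by simp
  qed
  have "\<bar>G' (xs+pi) - G' (xs + - u)\<bar> \<le> A / (1 + real n * (- u)) ^ (m - 1)"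
  proof (rule tail_right[OF G' m n A])
    show "0 \<le> - u" "- u \<le> pi" using u by auto
    fix t assume t: "t \<in> {xs + - u..xs+pi}"
    then have "2 * xs - t \<in> {xs-pi..xs+u}" by auto
    from gb[OF this] show "\<bar>g' t\<bar> \<le> A * real n / (1 + real n * (t - xs)) ^ m" unfolding g'_def by simp
  qed
  moreover have "G' (xs+pi) = - G (xs - pi)" "G' (xs + - u) = - G (xs + u)" unfolding G'_def by (simp_all add: algebra_simps)
  moreover have "\<bar>u\<bar> = - u" using u by simp
  ultimately show ?thesis by (simp add: abs_minus_commute)
qed

lemma g_upper:
  fixes C12 :: real
  assumes s: "1 \<le> s" and ls: "s < l" and n: "n \<ge> 1" and C: "C12 \<ge> 1"
    and sb: "\<And>i. i \<in> {1 .. 2 * s} \<Longrightarrow> 2 * real s * C12 / real n \<le> \<bar>sin ((xs - y i)/2)\<bar>"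
  shows "\<bar>J_ln l n u * (Pi_Y s y (xs + u) / Pi_Y s y xs)\<bar> \<le> (4 ^ s / c_lo l) * real n * dd n u ^ (2 * (l - s))"
proof -
  have l: "l \<ge> 1" using s ls by simp
  have np: "real n > 0" using n by simp
  have c0: "0 < 2 * real s * C12 / real n" using s C np by simp
  have ddp: "0 < dd n u" by (rule dd_pos)
  have Rb: "\<bar>Pi_Y s y (xs + u) / Pi_Y s y xs\<bar> \<le> (1 + \<bar>sin (u/2)\<bar> / (2 * real s * C12 / real n)) ^ (2 * s)"
    by (rule R_abs[OF c0 sb])
  have "\<bar>sin (u/2)\<bar> / (2 * real s * C12 / real n) = \<bar>sin (u/2)\<bar> * real n / (2 * real s * C12)"
    by simp
  also have "\<dots> \<le> \<bar>sin (u/2)\<bar> * real n / 1"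
  proof (rule divide_left_mono)
    have "1 * 1 \<le> real s * C12" using s C by (intro mult_mono) auto
    then show "1 \<le> 2 * real s * C12" by simp
    then show "0 < 2 * real s * C12 * 1" by linarith
  qed simp
  finally have "1 + \<bar>sin (u/2)\<bar> / (2 * real s * C12 / real n) \<le> 2 / dd n u"
    using dd_inv[of n u] by (simp add: mult.commute)
  then have "(1 + \<bar>sin (u/2)\<bar> / (2 * real s * C12 / real n)) ^ (2 * s) \<le> (2 / dd n u) ^ (2 * s)"
  proof (rule power_mono)
    have "0 \<le> \<bar>sin (u/2)\<bar> / (2 * real s * C12 / real n)" using c0 by (intro divide_nonneg_pos) auto
    then show "0 \<le> 1 + \<bar>sin (u/2)\<bar> / (2 * real s * C12 / real n)" by linarith
  qed
  with Rb have R2: "\<bar>Pi_Y s y (xs + u) / Pi_Y s y xs\<bar> \<le> (2 / dd n u) ^ (2 * s)" by linarith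
  have Jb: "J_ln l n u \<le> real n * dd n u ^ (2 * l) / c_lo l" by (rule J_upper[OF n l])
  have J0: "0 \<le> J_ln l n u" by (rule J_nonneg[OF n l])
  have "\<bar>J_ln l n u * (Pi_Y s y (xs + u) / Pi_Y s y xs)\<bar> = J_ln l n u * \<bar>Pi_Y s y (xs + u) / Pi_Y s y xs\<bar>"
    using J0 by (simp add: abs_mult)
  also have "\<dots> \<le> (real n * dd n u ^ (2 * l) / c_lo l) * (2 / dd n u) ^ (2 * s)"
    using Jb R2 J0 by (intro mult_mono) auto
  also have "\<dots> = (4 ^ s / c_lo l) * real n * dd n u ^ (2 * (l - s))"
  proof -
    have e: "dd n u ^ (2 * l) = dd n u ^ (2 * s) * dd n u ^ (2 * (l - s))"
    proof -
      have "2 * l = 2 * s + 2 * (l - s)" using ls by simp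
      then show ?thesis by (simp only: power_add[symmetric])
    qed
    have f: "(2::real) ^ (2 * s) = 4 ^ s" by (simp add: power_mult)
    have f2: "(2::real) ^ (s * 2) = 4 ^ s" using f by (simp add: mult.commute)
    show ?thesis unfolding e using ddp c_lo_pos[of l] by (simp add: power_divide f f2 field_simps)
  qed
  finally show ?thesis .
qed



lemma sin_sq_mid:
  fixes u :: real and \<nu> :: int
  assumes "2 * pi * of_int \<nu> + pi / 2 \<le> real n * u" "real n * u \<le> 2 * pi * of_int \<nu> + 3 * pi / 2"
  shows "sin (real n * u / 2) ^ 2 \<ge> 1/2"
proof -
  define th where "th = real n * u - 2 * pi * of_int \<nu>"
  have th: "pi/2 \<le> th" "th \<le> 3 * pi / 2" using assms unfolding th_def by auto
  have "cos (real n * u) = cos th"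
  proof -
    have "real n * u = th + (2 * pi) * of_int \<nu>" unfolding th_def by simp
    then show ?thesis by (simp add: cos_add)
  qed
  also have "cos th = sin (pi/2 - th)" by (simp add: cos_sin_eq)
  also have "\<dots> = - sin (th - pi/2)" by (simp add: sin_minus[symmetric])
  also have "\<dots> \<le> 0" using th by (simp add: sin_ge_zero)
  finally have c: "cos (real n * u) \<le> 0" .
  have "cos (2 * (real n * u / 2)) = 1 - 2 * sin (real n * u / 2) ^ 2" by (rule cos_double_sin)
  then show ?thesis using c by simp
qed

lemma main_n:
  fixes s l n :: nat and C12 xs :: real and y :: "nat \<Rightarrow> real"
  assumes s: "1 \<le> s" and ls: "s < l" and C: "C12 > 0" and n: "n \<ge> 1"
    and C12: "\<forall>\<nu>::nat. \<nu> \<le> 2 * l - 2 \<longrightarrow> integral {-pi..pi} (\<lambda>t. (1 + real n * \<bar>t\<bar>) ^ \<nu> * J_ln l n t) \<le> C12"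
    and hyp: "\<forall>i::int. \<bar>xs - yext s y i\<bar> \<ge> 2 * real s * C12 * pi / real n"
  shows "(1/2 < d_ln l n xs s y \<and> d_ln l n xs s y < 3/2)
       \<and> trig_poly (l * (n - 1) + s) (\<lambda>x. T_ln l n xs s y x - x / (2 * pi))
       \<and> (\<forall>x. Pi_Y s y xs * deriv (T_ln l n xs s y) x * Pi_Y s y x \<ge> 0)
       \<and> (\<forall>x. \<bar>deriv (T_ln l n xs s y) x\<bar> \<le> (2 * (4 ^ s / c_lo l)) * real n * delta_n n x xs ^ (2 * (l - s)))
       \<and> (\<forall>x \<in> (\<Union>\<nu>::int. {xs + 2 * pi * of_int \<nu> / real n + pi / (2 * real n) ..
                              xs + 2 * pi * of_int \<nu> / real n + 2 * pi / real n - pi / (2 * real n)}).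
            \<bar>deriv (T_ln l n xs s y) x\<bar> \<ge>
              (1 / (3 * 2 ^ l * c_hi / 2)) * real n * delta_n n x xs ^ (2 * l) * \<bar>Pi_Y s y x / Pi_Y s y xs\<bar>)
       \<and> (\<forall>x. \<bar>x - xs\<bar> \<le> 2 * pi \<longrightarrow>
            \<bar>chi x xs - T_ln l n xs s y x\<bar> \<le> (2 * ((4 ^ s / c_lo l) * (2 * pi) ^ (2 * (l - s)))) * delta_n n x xs ^ (2 * (l - s) - 1))"
proof -
  have l: "l \<ge> 1" using s ls by simp
  have np: "real n > 0" using n by simp
  have nb: "2 * real s * C12 \<le> real n" and sb: "\<And>i. i \<in> {1 .. 2 * s} \<Longrightarrow> 2 * real s * C12 / real n \<le> \<bar>sin ((xs - y i)/2)\<bar>"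
    using setup_dist[OF s n C hyp] by auto
  have c0: "0 < 2 * real s * C12 / real n" using s C np by simp
  have Pxs: "Pi_Y s y xs \<noteq> 0"
  proof -
    have "sin ((xs - y i)/2) \<noteq> 0" if "i \<in> {1 .. 2 * s}" for i using sb[OF that] c0 by auto
    then show ?thesis unfolding Pi_Y_def by simp
  qed
  define g where "g t = J_ln l n (t - xs) * (Pi_Y s y t / Pi_Y s y xs)" for t
  have tpg: "trig_poly (l * (n - 1) + s) g" unfolding g_def by (rule tp_integrand[OF n l])
  obtain G c where G: "\<And>x. (G has_real_derivative g x) (at x)"
    and Gp: "\<And>x. G (x + 2 * pi) = G x + 2 * pi * c" and Gtp: "trig_poly (l * (n - 1) + s) (\<lambda>x. G x - c * x)"
    using tp_has_antideriv[OF tpg] by blast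
  define GR where "GR t = G (xs + t)" for t
  have GR: "(GR has_real_derivative J_ln l n t * (Pi_Y s y (xs + t) / Pi_Y s y xs)) (at t)" for t
  proof -
    have "((\<lambda>t. xs + t) has_real_derivative 1) (at t)" by (auto intro!: derivative_eq_intros)
    from DERIV_chain2[OF G this] show ?thesis unfolding GR_def g_def by simp
  qed
  have dest: "\<bar>GR pi - GR (-pi) - 1\<bar> < 1/2" and C1: "C12 \<ge> 1"
    using d_estimate[OF s ls n C C12 sb nb GR] by auto
  define d where "d = d_ln l n xs s y"
  have dG: "d = G (xs + pi) - G (xs - pi)"
  proof -
    have "(g has_integral (G (xs + pi) - G (xs - pi))) {xs - pi..xs + pi}"
      by (rule ftc_real) (use G in auto)
    then show ?thesis unfolding d_def d_ln_def g_def[symmetric] by (simp add: integral_unique)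
  qed
  have dGR: "d = GR pi - GR (-pi)" unfolding dG GR_def by simp
  have d1: "1/2 < d" "d < 3/2" using dest unfolding dGR abs_less_iff by linarith+
  have dpos: "d > 0" using d1 by simp
  have dc: "d = 2 * pi * c" unfolding dG using Gp[of "xs - pi"] by (simp add: add.commute)
  have Tfun: "T_ln l n xs s y = (\<lambda>x. (G x - G (xs - pi)) / d)"
  proof
    fix x show "T_ln l n xs s y x = (G x - G (xs - pi)) / d"
      unfolding T_ln_def d_def[symmetric] g_def[symmetric] oint_antideriv[OF G] ..
  qed
  have Td: "((\<lambda>x. (G x - G (xs - pi)) / d) has_real_derivative g x / d) (at x)" for x
    using dpos by (auto intro!: derivative_eq_intros G)
  have dT: "deriv (T_ln l n xs s y) x = g x / d" for x
    unfolding Tfun by (rule DERIV_imp_deriv[OF Td])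
  have ii: "trig_poly (l * (n - 1) + s) (\<lambda>x. T_ln l n xs s y x - x / (2 * pi))"
  proof -
    have e: "T_ln l n xs s y x - x / (2 * pi) = (1/d) * (G x - c * x) + (- G (xs - pi) / d)" for x
    proof -
      have cpos: "c > 0" using dpos dc pi_gt_zero by (simp add: zero_less_mult_iff)
      show ?thesis unfolding Tfun dc using cpos pi_gt_zero by (simp add: field_simps)
    qed
    have "(\<lambda>x. T_ln l n xs s y x - x / (2 * pi)) = (\<lambda>x. (1/d) * (G x - c * x) + (- G (xs - pi) / d))"
      using e by (rule ext)
    then show ?thesis by (simp only:) (intro tp_add tp_scale tp_const Gtp)
  qed
  have iii: "\<forall>x. Pi_Y s y xs * deriv (T_ln l n xs s y) x * Pi_Y s y x \<ge> 0"
  proof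
    fix x
    have "Pi_Y s y xs * deriv (T_ln l n xs s y) x * Pi_Y s y x = J_ln l n (x - xs) * (Pi_Y s y x)^2 / d"
      unfolding dT g_def using Pxs by (simp add: field_simps power2_eq_square)
    also have "\<dots> \<ge> 0" using J_nonneg[OF n l] dpos by simp
    finally show "Pi_Y s y xs * deriv (T_ln l n xs s y) x * Pi_Y s y x \<ge> 0" .
  qed
  have gu: "g x = J_ln l n (x - xs) * (Pi_Y s y (xs + (x - xs)) / Pi_Y s y xs)" for x unfolding g_def by simp
  have gup: "\<bar>g x\<bar> \<le> (4 ^ s / c_lo l) * real n * dd n (x - xs) ^ (2 * (l - s))" for x
    unfolding gu by (rule g_upper[OF s ls n C1 sb])
  have iv: "\<forall>x. \<bar>deriv (T_ln l n xs s y) x\<bar> \<le> (2 * (4 ^ s / c_lo l)) * real n * delta_n n x xs ^ (2 * (l - s))"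
  proof
    fix x
    have "\<bar>deriv (T_ln l n xs s y) x\<bar> = \<bar>g x\<bar> / d" unfolding dT using dpos by (simp add: abs_divide)
    also have "\<dots> \<le> \<bar>g x\<bar> / (1/2)" by (rule divide_left_mono) (use d1 in auto)
    also have "\<dots> = 2 * \<bar>g x\<bar>" by simp
    also have "\<dots> \<le> 2 * ((4 ^ s / c_lo l) * real n * dd n (x - xs) ^ (2 * (l - s)))" using gup[of x] by simp
    finally show "\<bar>deriv (T_ln l n xs s y) x\<bar> \<le> (2 * (4 ^ s / c_lo l)) * real n * delta_n n x xs ^ (2 * (l - s))"
      unfolding delta_dd by simp
  qed
  have v: "\<forall>x \<in> (\<Union>\<nu>::int. {xs + 2 * pi * of_int \<nu> / real n + pi / (2 * real n) ..
                              xs + 2 * pi * of_int \<nu> / real n + 2 * pi / real n - pi / (2 * real n)}).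
            \<bar>deriv (T_ln l n xs s y) x\<bar> \<ge>
              (1 / (3 * 2 ^ l * c_hi / 2)) * real n * delta_n n x xs ^ (2 * l) * \<bar>Pi_Y s y x / Pi_Y s y xs\<bar>"
  proof
    fix x assume "x \<in> (\<Union>\<nu>::int. {xs + 2 * pi * of_int \<nu> / real n + pi / (2 * real n) ..
                              xs + 2 * pi * of_int \<nu> / real n + 2 * pi / real n - pi / (2 * real n)})"
    then obtain \<nu> :: int where xi: "xs + 2 * pi * of_int \<nu> / real n + pi / (2 * real n) \<le> x"
        "x \<le> xs + 2 * pi * of_int \<nu> / real n + 2 * pi / real n - pi / (2 * real n)" by auto
    define u where "u = x - xs"
    have u1: "2 * pi * of_int \<nu> + pi / 2 \<le> real n * u"
    proof -
      have "2 * pi * of_int \<nu> / real n + pi / (2 * real n) \<le> u" using xi unfolding u_def by simp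
      then have "real n * (2 * pi * of_int \<nu> / real n + pi / (2 * real n)) \<le> real n * u"
        using np by (intro mult_left_mono) auto
      moreover have "real n * (2 * pi * of_int \<nu> / real n + pi / (2 * real n)) = 2 * pi * of_int \<nu> + pi / 2"
        using np by (simp add: field_simps)
      ultimately show ?thesis by simp
    qed
    have u2: "real n * u \<le> 2 * pi * of_int \<nu> + 3 * pi / 2"
    proof -
      have "u \<le> 2 * pi * of_int \<nu> / real n + 2 * pi / real n - pi / (2 * real n)" using xi unfolding u_def by simp
      then have "real n * u \<le> real n * (2 * pi * of_int \<nu> / real n + 2 * pi / real n - pi / (2 * real n))"
        using np by (intro mult_left_mono) auto
      moreover have "real n * (2 * pi * of_int \<nu> / real n + 2 * pi / real n - pi / (2 * real n)) = 2 * pi * of_int \<nu> + 3 * pi / 2"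
        using np by (simp add: field_simps)
      ultimately show ?thesis by simp
    qed
    have Jl: "real n * dd n u ^ (2 * l) / (2 ^ l * c_hi) \<le> J_ln l n u"
      by (rule J_lower_mid[OF n l sin_sq_mid[OF u1 u2]])
    define R where "R = Pi_Y s y x / Pi_Y s y xs"
    have R0: "0 \<le> \<bar>R\<bar>" by simp
    have gx: "g x = J_ln l n u * R" unfolding g_def u_def R_def ..
    have J0: "0 \<le> J_ln l n u" by (rule J_nonneg[OF n l])
    have "(1 / (3 * 2 ^ l * c_hi / 2)) * real n * delta_n n x xs ^ (2 * l) * \<bar>R\<bar>
        = (2/3) * ((real n * dd n u ^ (2 * l) / (2 ^ l * c_hi)) * \<bar>R\<bar>)"
      unfolding delta_dd u_def using c_hi_pos by (simp add: field_simps)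
    also have "\<dots> \<le> (2/3) * (J_ln l n u * \<bar>R\<bar>)"
      using Jl R0 by (intro mult_left_mono mult_right_mono) auto
    also have "\<dots> \<le> (J_ln l n u * \<bar>R\<bar>) / d"
    proof -
      have "(J_ln l n u * \<bar>R\<bar>) / (3/2) \<le> (J_ln l n u * \<bar>R\<bar>) / d"
        by (rule divide_left_mono) (use d1 J0 R0 in auto)
      then show ?thesis by simp
    qed
    also have "\<dots> = \<bar>deriv (T_ln l n xs s y) x\<bar>" unfolding dT gx using dpos J0 by (simp add: abs_mult abs_divide)
    finally show "(1 / (3 * 2 ^ l * c_hi / 2)) * real n * delta_n n x xs ^ (2 * l) * \<bar>Pi_Y s y x / Pi_Y s y xs\<bar>
        \<le> \<bar>deriv (T_ln l n xs s y) x\<bar>" unfolding R_def .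
  qed
  define m where "m = 2 * (l - s)"
  have m2: "m \<ge> 2" unfolding m_def using ls by simp
  define A0 where "A0 = (4 ^ s / c_lo l) * (2 * pi) ^ m"
  have A0: "A0 \<ge> 0" unfolding A0_def using c_lo_pos[of l] by simp
  have gb: "\<bar>g t\<bar> \<le> A0 * real n / (1 + real n * \<bar>t - xs\<bar>) ^ m" if t: "\<bar>t - xs\<bar> \<le> pi" for t
  proof -
    have q: "0 < 1 + real n * \<bar>t - xs\<bar>" by (simp add: add_pos_nonneg)
    have "dd n (t - xs) ^ m \<le> (2 * pi / (1 + real n * \<bar>t - xs\<bar>)) ^ m"
      using dd_upper[OF t, of n] dd_pos[of n "t - xs"] by (simp add: power_mono)
    then have "(4 ^ s / c_lo l) * real n * dd n (t - xs) ^ m \<le> (4 ^ s / c_lo l) * real n * (2 * pi / (1 + real n * \<bar>t - xs\<bar>)) ^ m"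
      using c_lo_pos[of l] np by (intro mult_left_mono) auto
    also have "\<dots> = A0 * real n / (1 + real n * \<bar>t - xs\<bar>) ^ m" unfolding A0_def by (simp add: power_divide)
    finally show ?thesis using gup[of t] unfolding m_def by linarith
  qed
  have tr: "\<bar>G (xs+pi) - G (xs+u)\<bar> \<le> A0 / (1 + real n * u) ^ (m - 1)" if u: "0 \<le> u" "u \<le> pi" for u
  proof (rule tail_right[OF G m2 n A0 u])
    fix t assume "t \<in> {xs+u..xs+pi}"
    then have "\<bar>t - xs\<bar> \<le> pi" "\<bar>t - xs\<bar> = t - xs" using u by auto
    then show "\<bar>g t\<bar> \<le> A0 * real n / (1 + real n * (t - xs)) ^ m" using gb by metis
  qed
  have tl: "\<bar>G (xs+u) - G (xs-pi)\<bar> \<le> A0 / (1 + real n * \<bar>u\<bar>) ^ (m - 1)" if u: "-pi \<le> u" "u \<le> 0" for u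
  proof (rule tail_left[OF G m2 n A0 u])
    fix t assume "t \<in> {xs-pi..xs+u}"
    then have "\<bar>t - xs\<bar> \<le> pi" "\<bar>t - xs\<bar> = xs - t" using u by auto
    then show "\<bar>g t\<bar> \<le> A0 * real n / (1 + real n * (xs - t)) ^ m" using gb by metis
  qed
  have ddl: "A0 / (1 + real n * \<bar>v\<bar>) ^ (m - 1) \<le> A0 * dd n v ^ (m - 1)" for v
  proof -
    have "(1 / (1 + real n * \<bar>v\<bar>)) ^ (m - 1) \<le> dd n v ^ (m - 1)"
      by (rule power_mono[OF dd_lower]) (simp add: add_pos_nonneg)
    then have "A0 * (1 / (1 + real n * \<bar>v\<bar>)) ^ (m - 1) \<le> A0 * dd n v ^ (m - 1)" using A0 by (rule mult_left_mono)
    then show ?thesis by (simp add: power_divide)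
  qed
  have ddl': "A0 / (1 + real n * v) ^ (m - 1) \<le> A0 * dd n v ^ (m - 1)" if "v \<ge> 0" for v
    using ddl[of v] that by simp
  have divd: "\<bar>V / d\<bar> \<le> 2 * B" if "\<bar>V\<bar> \<le> B" for V B
  proof -
    have "\<bar>V / d\<bar> = \<bar>V\<bar> / d" using dpos by (simp add: abs_divide)
    also have "\<dots> \<le> \<bar>V\<bar> / (1/2)" by (rule divide_left_mono) (use d1 in auto)
    finally show ?thesis using that by simp
  qed
  have dd_eq: "G (x + 2 * pi) = G x + d" for x using Gp[of x] dc by simp
  have vi: "\<forall>x. \<bar>x - xs\<bar> \<le> 2 * pi \<longrightarrow>
            \<bar>chi x xs - T_ln l n xs s y x\<bar> \<le> (2 * ((4 ^ s / c_lo l) * (2 * pi) ^ (2 * (l - s)))) * delta_n n x xs ^ (2 * (l - s) - 1)"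
  proof (intro allI impI)
    fix x assume x: "\<bar>x - xs\<bar> \<le> 2 * pi"
    define u where "u = x - xs"
    have goal_eq: "(2 * ((4 ^ s / c_lo l) * (2 * pi) ^ (2 * (l - s)))) * delta_n n x xs ^ (2 * (l - s) - 1) = 2 * (A0 * dd n u ^ (m - 1))"
      unfolding A0_def m_def delta_dd u_def by simp
    have "\<bar>chi x xs - T_ln l n xs s y x\<bar> \<le> 2 * (A0 * dd n u ^ (m - 1))"
    proof (cases "u \<le> 0")
      case True
      then have chi0: "chi x xs = 0" unfolding chi_def u_def by simp
      show ?thesis
      proof (cases "-pi \<le> u")
        case True2: True
        have "\<bar>G (xs+u) - G (xs-pi)\<bar> \<le> A0 * dd n u ^ (m - 1)"
          using tl[OF True2 True] ddl[of u] by linarith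
        from divd[OF this] show ?thesis unfolding chi0 Tfun u_def by simp
      next
        case False
        define u' where "u' = u + 2 * pi"
        have u': "0 \<le> u'" "u' \<le> pi" using False x unfolding u'_def u_def by auto
        have "\<bar>G (xs+pi) - G (xs+u')\<bar> \<le> A0 * dd n u ^ (m - 1)"
          using tr[OF u'] ddl'[OF u'(1)] dd_periodic(1)[of n u] unfolding u'_def by simp
        moreover have "G x - G (xs - pi) = - (G (xs+pi) - G (xs+u'))"
          using dd_eq[of x] dd_eq[of "xs - pi"] unfolding u'_def u_def by (simp add: algebra_simps)
        ultimately have "\<bar>G x - G (xs - pi)\<bar> \<le> A0 * dd n u ^ (m - 1)" by simp
        from divd[OF this] show ?thesis unfolding chi0 Tfun by simp
      qed
    next
      case False
      then have chi1: "chi x xs = 1" unfolding chi_def u_def by simp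
      have one: "1 - (G x - G (xs - pi)) / d = (d - (G x - G (xs - pi))) / d" using dpos by (simp add: field_simps)
      show ?thesis
      proof (cases "u \<le> pi")
        case True
        have "\<bar>G (xs+pi) - G (xs+u)\<bar> \<le> A0 * dd n u ^ (m - 1)"
          using tr[of u] True False ddl'[of u] by force
        moreover have "d - (G x - G (xs - pi)) = G (xs+pi) - G (xs+u)" unfolding dG u_def by simp
        ultimately show ?thesis using divd unfolding chi1 Tfun one by metis
      next
        case False2: False
        define u' where "u' = u - 2 * pi"
        have u': "-pi \<le> u'" "u' \<le> 0" using False2 x unfolding u'_def u_def by auto
        have "\<bar>G (xs+u') - G (xs-pi)\<bar> \<le> A0 * dd n u ^ (m - 1)"
          using tl[OF u'] ddl[of u'] dd_periodic(2)[of n u] unfolding u'_def by simp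
        moreover have "d - (G x - G (xs - pi)) = - (G (xs+u') - G (xs-pi))"
          using dd_eq[of "x - 2 * pi"] unfolding u'_def u_def by (simp add: algebra_simps)
        ultimately have "\<bar>d - (G x - G (xs - pi))\<bar> \<le> A0 * dd n u ^ (m - 1)" by simp
        from divd[OF this] show ?thesis unfolding chi1 Tfun one .
      qed
    qed
    then show "\<bar>chi x xs - T_ln l n xs s y x\<bar> \<le> (2 * ((4 ^ s / c_lo l) * (2 * pi) ^ (2 * (l - s)))) * delta_n n x xs ^ (2 * (l - s) - 1)"
      unfolding goal_eq .
  qed
  show ?thesis using d1 ii iii iv v vi unfolding d_def by blast
qed

theorem lemma5:
  fixes s l :: nat and C12 :: real
  assumes "1 \<le> s" and "s < l" and "C12 > 0"
    and C12: "\<forall>n::nat. n \<ge> 1 \<longrightarrow> (\<forall>\<nu>::nat. \<nu> \<le> 2 * l - 2 \<longrightarrow>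
               integral {-pi..pi} (\<lambda>t. (1 + real n * \<bar>t\<bar>) ^ \<nu> * J_ln l n t) \<le> C12)"
  shows "\<exists>C13 C14 C15 :: real. C13 > 0 \<and> C14 > 0 \<and> C15 > 0 \<and>
    (\<forall>(n::nat) (y::nat \<Rightarrow> real) (xs::real).
       n \<ge> 1 \<longrightarrow>
       (\<forall>i. 1 \<le> i \<and> i < 2 * s \<longrightarrow> y (Suc i) < y i) \<longrightarrow>
       - pi \<le> y (2 * s) \<longrightarrow> y 1 < pi \<longrightarrow>
       (\<forall>i::int. \<bar>xs - yext s y i\<bar> \<ge> 2 * real s * C12 * pi / real n) \<longrightarrow>
       (1/2 < d_ln l n xs s y \<and> d_ln l n xs s y < 3/2)
       \<and> trig_poly (l * (n - 1) + s) (\<lambda>x. T_ln l n xs s y x - x / (2 * pi))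
       \<and> (\<forall>x. Pi_Y s y xs * deriv (T_ln l n xs s y) x * Pi_Y s y x \<ge> 0)
       \<and> (\<forall>x. \<bar>deriv (T_ln l n xs s y) x\<bar> \<le> C13 * real n * delta_n n x xs ^ (2 * (l - s)))
       \<and> (\<forall>x \<in> (\<Union>\<nu>::int. {xs + 2 * pi * of_int \<nu> / real n + pi / (2 * real n) ..
                              xs + 2 * pi * of_int \<nu> / real n + 2 * pi / real n - pi / (2 * real n)}).
            \<bar>deriv (T_ln l n xs s y) x\<bar> \<ge>
              (1 / C14) * real n * delta_n n x xs ^ (2 * l) * \<bar>Pi_Y s y x / Pi_Y s y xs\<bar>)
       \<and> (\<forall>x. \<bar>x - xs\<bar> \<le> 2 * pi \<longrightarrow>
            \<bar>chi x xs - T_ln l n xs s y x\<bar> \<le> C15 * delta_n n x xs ^ (2 * (l - s) - 1)))"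
proof -
  define C13 where "C13 = 2 * (4 ^ s / c_lo l)"
  define C14 where "C14 = 3 * 2 ^ l * c_hi / 2"
  define C15 where "C15 = 2 * ((4 ^ s / c_lo l) * (2 * pi) ^ (2 * (l - s)))"
  have p: "C13 > 0" "C14 > 0" "C15 > 0" unfolding C13_def C14_def C15_def using c_lo_pos[of l] c_hi_pos by auto
  show ?thesis
    apply (rule exI[of _ C13], rule exI[of _ C14], rule exI[of _ C15])
    apply (intro conjI p)
    apply (intro allI impI)
    subgoal premises prems for n y xs
    proof -
      have n: "n \<ge> 1" using prems by blast
      have h: "\<forall>i::int. \<bar>xs - yext s y i\<bar> \<ge> 2 * real s * C12 * pi / real n" using prems by blast
      have C12n: "\<forall>\<nu>::nat. \<nu> \<le> 2 * l - 2 \<longrightarrow> integral {-pi..pi} (\<lambda>t. (1 + real n * \<bar>t\<bar>) ^ \<nu> * J_ln l n t) \<le> C12"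
        using C12 n by blast
      show ?thesis using main_n[OF assms(1) assms(2) assms(3) n C12n h] unfolding C13_def C14_def C15_def by blast
    qed
    done
qed


end
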